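(* Let $(\Omega,\mathcal F,\mathbb P)$ be a probability space and $\sigma\colon\Omega\to\Omega$ an invertible, measurable, $\mathbb P$-preserving and ergodic transformation. Let $(M,m)$ be a probability space and let $\mathcal B_{ss}\subset\mathcal B_s\subset\mathcal B_w\subset L^1(m)$ be Banach spaces of real-valued measurable functions on $M$ with $\|h\|_{L^1(m)}\le\|h\|_w\le\|h\|_s\le\|h\|_{ss}$. Let $\psi(\varphi)=\int_M\varphi\,dm$ and $V_s:=\{h\in\mathcal B_s:\psi(h)=0\}$. Let $I\subset(-1,1)$ be an open interval containing $0$ and for $\epsilon\in I$, $\omega\in\Omega$ let $\mathcal L_{\omega,\epsilon}$ be linear operators bounded on $\mathcal B_w,\mathcal B_s,\mathcal B_{ss}$ with $\psi\circ\mathcal L_{\omega,\epsilon}=\psi$; $\mathcal L^n_{\omega,\epsilon}:=\mathcal L_{\sigma^{n-1}\omega,\epsilon}\circ\cdots\circ\mathcal L_{\omega,\epsilon}$, $\mathcal L_\omega:=\mathcal L_{\omega,0}$. Assume there exist $C_i\in L^{p_i}(\Omega,\mathcal F,\mathbb P)$, $p_i>0$, $i\in\{0,1,2,3,4\}$, $A,B\in L^{p_5}(\Omega,\mathcal F,\mathbb P)$, $p_5>0$, $\beta>1$, and for each $\epsilon\in I$ a full-measure set $\Omega_\epsilon\subset\Omega$, such that: (1) $\|\mathcal L^n_{\sigma^{-n}\omega,\epsilon}\|_w\le C_0(\omega)$ for $n\in\mathbb N$, $\epsilon\in I$, $\omega\in\Omega_\epsilon$; (2) $\|\mathcal L^n_{\omega,\epsilon}h\|_w\le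 C_1(\omega)n^{-\beta}\|h\|_s$ for $n\in\mathbb N$, $\epsilon\in I$, $\omega\in\Omega_\epsilon$, $h\in V_s$; (3) $\|(\mathcal L_{\omega,\epsilon}-\mathcal L_\omega)h\|_w\le C_2(\omega)|\epsilon|\,\|h\|_s$ for $\epsilon\in I$, $\omega\in\Omega_\epsilon$, $h\in\mathcal B_s$; (4) for $\mathbb P$-a.e. $\omega$ there is a linear operator $\hat{\mathcal L}_\omega\colon\mathcal B_{ss}\to V_s$ with $\big\|\frac1\epsilon(\mathcal L_{\omega,\epsilon}-\mathcal L_\omega)h-\hat{\mathcal L}_\omega h\big\|_s\le C_3(\omega)|\epsilon|\,\|h\|_{ss}$ for $\epsilon\in I\setminus\{0\}$, $\omega\in\Omega_\epsilon$, $h\in\mathcal B_{ss}$, and $\|\hat{\mathcal L}_\omega h\|_s\le C_3(\omega)\|h\|_{ss}$ for $\mathbb P$-a.e. $\omega$ and all $h\in\mathcal B_{ss}$; (5) for each $\epsilon\in I$ there is a measurable family $(h_{\omega,\epsilon})_{\omega\in\Omega}\subset\mathcal B_{ss}$ with $h_{\omega,\epsilon}\ge0$, $\mathcal L_{\omega,\epsilon}h_{\omega,\epsilon}=h_{\sigma\omega,\epsilon}$, $\psi(h_{\omega,\epsilon})=1$ and $\|h_{\omega,\epsilon}\|_{ss}\le C_4(\omega)$ for each $\epsilon\in I$, $\omega\in\Omega_\epsilon$; (6) $\|\mathcal L^j_{\sigma^{-n}\omega}\|_s\le A(\sigma^{-n}\omega)B(\sigma^{j-n}\omega)$ for $\mathbb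 P$-a.e. $\omega$, $n\in\mathbb N$, $0\le j\le n$. Let $\Phi\colon\Omega\times M\to\mathbb R$ be measurable with $\Phi(\omega,\cdot)\in L^\infty(m)$ and $G(\omega):=\|\Phi(\omega,\cdot)\|_{L^\infty(m)}\in L^{p_6}(\Omega,\mathcal F,\mathbb P)$ for some $p_6>0$ with $\frac1{p_6}+\frac1{p_1}+\frac1{p_3}+\frac1{p_4}\le1$ and $\frac1{p_6}+\frac1{p_0}+\frac1{p_2}+\frac2{p_5}+\frac1{p_3}+\frac1{p_4}\le1$. Define $\int_{\Omega\times M}\Phi\,d\mu_\epsilon:=\int_\Omega\int_M\Phi(\omega,\cdot)h_{\omega,\epsilon}\,dm\,d\mathbb P(\omega)$. Then $\epsilon\mapsto\int_{\Omega\times M}\Phi\,d\mu_\epsilon$ is differentiable at $\epsilon=0$. *)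

theory Defs
  imports "HOL-Probability.Probability"
begin

definition invertible_mp :: "'w measure \<Rightarrow> ('w \<Rightarrow> 'w) \<Rightarrow> bool" where
  "invertible_mp P \<sigma> \<longleftrightarrow>
     bij_betw \<sigma> (space P) (space P) \<and> \<sigma> \<in> measurable P P \<and>
     inv_into (space P) \<sigma> \<in> measurable P P \<and>
     (\<forall>A\<in>sets P. measure P (\<sigma> -` A \<inter> space P) = measure P A)"

definition ergodic :: "'w measure \<Rightarrow> ('w \<Rightarrow> 'w) \<Rightarrow> bool" where
  "ergodic P \<sigma> \<longleftrightarrow>
     (\<forall>A\<in>sets P. \<sigma> -` A \<inter> space P = A \<longrightarrow> measure P A = 0 \<or> measure P A = 1)"

definition sinv :: "'w measure \<Rightarrow> ('w \<Rightarrow> 'w) \<Rightarrow> 'w \<Rightarrow> 'w" where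
  "sinv P \<sigma> = inv_into (space P) \<sigma>"

definition Lp_fun :: "'w measure \<Rightarrow> real \<Rightarrow> ('w \<Rightarrow> real) \<Rightarrow> bool" where
  "Lp_fun P p f \<longleftrightarrow> f \<in> borel_measurable P \<and> integrable P (\<lambda>\<omega>. \<bar>f \<omega>\<bar> powr p)"

definition fun_banach :: "'x measure \<Rightarrow> ('x \<Rightarrow> real) set \<Rightarrow> (('x \<Rightarrow> real) \<Rightarrow> real) \<Rightarrow> bool" where
  "fun_banach m B N \<longleftrightarrow>
     B \<subseteq> borel_measurable m \<and> (\<lambda>x. 0) \<in> B \<and>
     (\<forall>f\<in>B. \<forall>g\<in>B. (\<lambda>x. f x + g x) \<in> B) \<and>
     (\<forall>c. \<forall>f\<in>B. (\<lambda>x. c * f x) \<in> B) \<and>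
     (\<forall>f\<in>B. N f \<ge> 0 \<and> (N f = 0 \<longleftrightarrow> f = (\<lambda>x. 0))) \<and>
     (\<forall>f\<in>B. \<forall>g\<in>B. N (\<lambda>x. f x + g x) \<le> N f + N g) \<and>
     (\<forall>c. \<forall>f\<in>B. N (\<lambda>x. c * f x) = \<bar>c\<bar> * N f) \<and>
     (\<forall>u. (\<forall>n. u n \<in> B) \<and>
          (\<forall>e>0. \<exists>K. \<forall>i\<ge>K. \<forall>j\<ge>K. N (\<lambda>x. u i x - u j x) < e) \<longrightarrow>
          (\<exists>f\<in>B. (\<lambda>n. N (\<lambda>x. u n x - f x)) \<longlonglongrightarrow> 0))"

definition L1norm :: "'x measure \<Rightarrow> ('x \<Rightarrow> real) \<Rightarrow> real" where
  "L1norm m h = (\<integral>x. \<bar>h x\<bar> \<partial>m)"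

definition bounded_op_on :: "('x \<Rightarrow> real) set \<Rightarrow> (('x \<Rightarrow> real) \<Rightarrow> real)
     \<Rightarrow> (('x \<Rightarrow> real) \<Rightarrow> ('x \<Rightarrow> real)) \<Rightarrow> bool" where
  "bounded_op_on B N T \<longleftrightarrow>
     (\<forall>f\<in>B. \<forall>g\<in>B. T (\<lambda>x. f x + g x) = (\<lambda>x. T f x + T g x)) \<and>
     (\<forall>c. \<forall>f\<in>B. T (\<lambda>x. c * f x) = (\<lambda>x. c * T f x)) \<and>
     T ` B \<subseteq> B \<and> (\<exists>K. \<forall>h\<in>B. N (T h) \<le> K * N h)"

fun cocycle :: "('w \<Rightarrow> real \<Rightarrow> ('x \<Rightarrow> real) \<Rightarrow> ('x \<Rightarrow> real)) \<Rightarrow> ('w \<Rightarrow> 'w) \<Rightarrow> nat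
     \<Rightarrow> 'w \<Rightarrow> real \<Rightarrow> ('x \<Rightarrow> real) \<Rightarrow> ('x \<Rightarrow> real)" where
  "cocycle L \<sigma> 0 \<omega> \<epsilon> = id"
| "cocycle L \<sigma> (Suc n) \<omega> \<epsilon> = L ((\<sigma> ^^ n) \<omega>) \<epsilon> \<circ> cocycle L \<sigma> n \<omega> \<epsilon>"

definition Linf_norm :: "'x measure \<Rightarrow> ('x \<Rightarrow> real) \<Rightarrow> ereal" where
  "Linf_norm m f = esssup m (\<lambda>x. ereal \<bar>f x\<bar>)"

end

theory Submission
  imports Defs
begin

lemma prod4_le:
  fixes x1 x2 x3 x4 p1 p2 p3 p4 :: real
  assumes x: "x1 \<ge> 0" "x2 \<ge> 0" "x3 \<ge> 0" "x4 \<ge> 0"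
    and p: "p1 > 0" "p2 > 0" "p3 > 0" "p4 > 0"
    and s: "1/p1 + 1/p2 + 1/p3 + 1/p4 \<le> 1"
  shows "x1 * x2 * x3 * x4 \<le> 1 + x1 powr p1 + x2 powr p2 + x3 powr p3 + x4 powr p4"
proof -
  define S where "S = 1 + x1 powr p1 + x2 powr p2 + x3 powr p3 + x4 powr p4"
  have S1: "S \<ge> 1" unfolding S_def by simp
  have b: "x \<le> S powr (1/p)" if "x \<ge> 0" "p > 0" "x powr p \<le> S" for x p :: real
  proof -
    have "x = (x powr p) powr (1/p)" using that by (simp add: powr_powr)
    also have "\<dots> \<le> S powr (1/p)" using that by (intro powr_mono2) auto
    finally show ?thesis .
  qed
  have "x1 * x2 * x3 * x4 \<le> S powr (1/p1) * S powr (1/p2) * S powr (1/p3) * S powr (1/p4)"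
    using x p by (intro mult_mono b) (auto simp: S_def)
  also have "\<dots> = S powr (1/p1 + 1/p2 + 1/p3 + 1/p4)" using S1 by (simp add: powr_add)
  also have "\<dots> \<le> S powr 1" using S1 s by (intro powr_mono) auto
  finally show ?thesis using S1 by (simp add: S_def)
qed

lemma le_one_plus_powr:
  fixes x p :: real assumes "x \<ge> 0" "p \<ge> 1"
  shows "x \<le> 1 + x powr p"
proof (cases "x \<le> 1")
  case False
  then have "x powr 1 \<le> x powr p" using assms by (intro powr_mono) auto
  then show ?thesis using False by simp
qed (use assms in \<open>smt (verit) powr_ge_zero\<close>)

context
  fixes m :: "'x measure" and B :: "('x \<Rightarrow> real) set" and N :: "('x \<Rightarrow> real) \<Rightarrow> real"
  assumes fb: "fun_banach m B N"
begin

lemma fb_zero: "(\<lambda>x. 0) \<in> B" using fb unfolding fun_banach_def by blast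
lemma fb_add: "f \<in> B \<Longrightarrow> g \<in> B \<Longrightarrow> (\<lambda>x. f x + g x) \<in> B" using fb unfolding fun_banach_def by blast
lemma fb_smult: "f \<in> B \<Longrightarrow> (\<lambda>x. c * f x) \<in> B" using fb unfolding fun_banach_def by blast
lemma fb_nonneg: "f \<in> B \<Longrightarrow> N f \<ge> 0" using fb unfolding fun_banach_def by blast
lemma fb_tri: "f \<in> B \<Longrightarrow> g \<in> B \<Longrightarrow> N (\<lambda>x. f x + g x) \<le> N f + N g" using fb unfolding fun_banach_def by blast
lemma fb_hom: "f \<in> B \<Longrightarrow> N (\<lambda>x. c * f x) = \<bar>c\<bar> * N f" using fb unfolding fun_banach_def by blast
lemma fb_minus: "f \<in> B \<Longrightarrow> g \<in> B \<Longrightarrow> (\<lambda>x. f x - g x) \<in> B"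
  using fb_add[of f "\<lambda>x. (-1) * g x"] fb_smult[of g "-1"] by simp
lemma fb_div: "f \<in> B \<Longrightarrow> (\<lambda>x. f x / c) \<in> B"
  using fb_smult[of f "1/c"] by simp
lemma fb_uminus_norm: "f \<in> B \<Longrightarrow> N (\<lambda>x. - f x) = N f"
  using fb_hom[of f "-1"] by simp
lemma fb_tri_minus: "f \<in> B \<Longrightarrow> g \<in> B \<Longrightarrow> N (\<lambda>x. f x - g x) \<le> N f + N g"
  using fb_tri[of f "\<lambda>x. - g x"] fb_smult[of g "-1"] fb_uminus_norm[of g] by simp
lemma fb_div_norm: "f \<in> B \<Longrightarrow> N (\<lambda>x. f x / c) = N f / \<bar>c\<bar>"
  using fb_hom[of f "1/c"] by (simp add: field_simps)
lemma fb_norm_zero: "N (\<lambda>x. 0) = 0" using fb_hom[OF fb_zero, of 0] by simp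
end

definition lin_on :: "('x \<Rightarrow> real) set \<Rightarrow> (('x \<Rightarrow> real) \<Rightarrow> ('x \<Rightarrow> real)) \<Rightarrow> bool" where
  "lin_on B T \<longleftrightarrow> (\<forall>f\<in>B. \<forall>g\<in>B. T (\<lambda>x. f x + g x) = (\<lambda>x. T f x + T g x)) \<and>
     (\<forall>c. \<forall>f\<in>B. T (\<lambda>x. c * f x) = (\<lambda>x. c * T f x)) \<and> T ` B \<subseteq> B"

lemma bounded_op_lin: "bounded_op_on B N T \<Longrightarrow> lin_on B T"
  unfolding bounded_op_on_def lin_on_def by blast

lemma lin_on_id: "lin_on B id" unfolding lin_on_def by auto

lemma lin_on_comp: "lin_on B S \<Longrightarrow> lin_on B T \<Longrightarrow> lin_on B (S \<circ> T)"
  unfolding lin_on_def by (auto simp: image_subset_iff)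

lemma lin_on_mem: "lin_on B T \<Longrightarrow> f \<in> B \<Longrightarrow> T f \<in> B"
  unfolding lin_on_def by blast

lemma lin_on_add: "lin_on B T \<Longrightarrow> f \<in> B \<Longrightarrow> g \<in> B \<Longrightarrow> T (\<lambda>x. f x + g x) = (\<lambda>x. T f x + T g x)"
  unfolding lin_on_def by blast

lemma lin_on_smult: "lin_on B T \<Longrightarrow> f \<in> B \<Longrightarrow> T (\<lambda>x. c * f x) = (\<lambda>x. c * T f x)"
  unfolding lin_on_def by blast

lemma lin_on_minus:
  assumes "fun_banach m B N" "lin_on B T" "f \<in> B" "g \<in> B"
  shows "T (\<lambda>x. f x - g x) = (\<lambda>x. T f x - T g x)"
proof -
  have "T (\<lambda>x. f x - g x) = T (\<lambda>x. f x + (\<lambda>x. (-1) * g x) x)" by simp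
  also have "\<dots> = (\<lambda>x. T f x + T (\<lambda>x. (-1) * g x) x)"
    using assms by (intro lin_on_add fb_smult) auto
  also have "\<dots> = (\<lambda>x. T f x - T g x)" using lin_on_smult[OF assms(2,4), of "-1"] by simp
  finally show ?thesis .
qed

lemma lin_on_div:
  assumes "lin_on B T" "f \<in> B"
  shows "T (\<lambda>x. f x / c) = (\<lambda>x. T f x / c)"
  using lin_on_smult[OF assms, of "1/c"] by simp

lemma cocycle_left:
  "cocycle L \<sigma> (Suc n) x \<epsilon> = cocycle L \<sigma> n (\<sigma> x) \<epsilon> \<circ> L x \<epsilon>"
proof (induction n arbitrary: x)
  case 0
  then show ?case by simp
next
  case (Suc n)
  have "cocycle L \<sigma> (Suc (Suc n)) x \<epsilon> = L ((\<sigma> ^^ Suc n) x) \<epsilon> \<circ> cocycle L \<sigma> (Suc n) x \<epsilon>" by simp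
  also have "\<dots> = L ((\<sigma> ^^ n) (\<sigma> x)) \<epsilon> \<circ> (cocycle L \<sigma> n (\<sigma> x) \<epsilon> \<circ> L x \<epsilon>)"
    unfolding Suc.IH by (simp add: funpow_Suc_right del: funpow.simps)
  also have "\<dots> = cocycle L \<sigma> (Suc n) (\<sigma> x) \<epsilon> \<circ> L x \<epsilon>" by (simp add: o_assoc)
  finally show ?case .
qed

lemma cocycle_lin:
  assumes "\<And>j. j < n \<Longrightarrow> lin_on B (L ((\<sigma> ^^ j) x) \<epsilon>)"
  shows "lin_on B (cocycle L \<sigma> n x \<epsilon>)"
  using assms
proof (induction n)
  case 0 then show ?case by (simp add: lin_on_def)
next
  case (Suc n)
  have "lin_on B (L ((\<sigma> ^^ n) x) \<epsilon> \<circ> cocycle L \<sigma> n x \<epsilon>)"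
    using Suc by (intro lin_on_comp) auto
  then show ?case by (simp only: cocycle.simps)
qed

lemma cocycle_fix:
  assumes "\<And>j. j < n \<Longrightarrow> L ((\<sigma> ^^ j) x) \<epsilon> (h ((\<sigma> ^^ j) x)) = h (\<sigma> ((\<sigma> ^^ j) x))"
  shows "cocycle L \<sigma> n x \<epsilon> (h x) = h ((\<sigma> ^^ n) x)"
  using assms
proof (induction n)
  case 0 then show ?case by simp
next
  case (Suc n) then show ?case by simp
qed


locale ctx =
  fixes P :: "'w measure" and \<sigma> :: "'w \<Rightarrow> 'w"
    and m :: "'x measure"
    and Bw Bs Bss :: "('x \<Rightarrow> real) set"
    and nw ns nss :: "('x \<Rightarrow> real) \<Rightarrow> real"
    and I :: "real set" and a b :: real
    and L :: "'w \<Rightarrow> real \<Rightarrow> ('x \<Rightarrow> real) \<Rightarrow> ('x \<Rightarrow> real)"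
    and Om :: "real \<Rightarrow> 'w set"
    and C0 C1 C2 C3 C4 :: "'w \<Rightarrow> real"
    and p1 p3 p4 p6 \<beta> :: real
    and h :: "real \<Rightarrow> 'w \<Rightarrow> 'x \<Rightarrow> real"
    and \<Phi> :: "'w \<Rightarrow> 'x \<Rightarrow> real"
    and Lhat :: "'w \<Rightarrow> ('x \<Rightarrow> real) \<Rightarrow> ('x \<Rightarrow> real)"
  assumes P: "prob_space P"
    and \<sigma>: "invertible_mp P \<sigma>"
    and m: "prob_space m"
    and spw: "fun_banach m Bw nw" and sps: "fun_banach m Bs ns" and spss: "fun_banach m Bss nss"
    and sub1: "Bss \<subseteq> Bs" and sub2: "Bs \<subseteq> Bw" and intw: "\<forall>f\<in>Bw. integrable m f"
    and L1w: "\<forall>f\<in>Bw. L1norm m f \<le> nw f" and ws: "\<forall>f\<in>Bs. nw f \<le> ns f" and sss: "\<forall>f\<in>Bss. ns f \<le> nss f"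
    and I: "I = {a<..<b}" "-1 \<le> a" "a < 0" "0 < b" "b \<le> 1"
    and L_bounded: "\<forall>\<epsilon>\<in>I. \<forall>\<omega>\<in>space P.
        bounded_op_on Bw nw (L \<omega> \<epsilon>) \<and> bounded_op_on Bs ns (L \<omega> \<epsilon>) \<and>
        bounded_op_on Bss nss (L \<omega> \<epsilon>)"
    and L_psi: "\<forall>\<epsilon>\<in>I. \<forall>\<omega>\<in>space P. \<forall>f\<in>Bw. (\<integral>x. L \<omega> \<epsilon> f x \<partial>m) = (\<integral>x. f x \<partial>m)"
    and Lp: "Lp_fun P p1 C1" "Lp_fun P p3 C3" "Lp_fun P p4 C4"
      "p1 > 0" "p3 > 0" "p4 > 0"
    and \<beta>: "\<beta> > 1"
    and Om: "\<forall>\<epsilon>\<in>I. Om \<epsilon> \<in> sets P \<and> measure P (Om \<epsilon>) = 1"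
    and H1: "\<forall>n\<ge>1. \<forall>\<epsilon>\<in>I. \<forall>\<omega>\<in>Om \<epsilon>. \<forall>f\<in>Bw.
        nw (cocycle L \<sigma> n ((sinv P \<sigma> ^^ n) \<omega>) \<epsilon> f) \<le> C0 \<omega> * nw f"
    and H2: "\<forall>n\<ge>1. \<forall>\<epsilon>\<in>I. \<forall>\<omega>\<in>Om \<epsilon>. \<forall>f\<in>Bs. (\<integral>x. f x \<partial>m) = 0 \<longrightarrow>
        nw (cocycle L \<sigma> n \<omega> \<epsilon> f) \<le> C1 \<omega> * real n powr (-\<beta>) * ns f"
    and H3: "\<forall>\<epsilon>\<in>I. \<forall>\<omega>\<in>Om \<epsilon>. \<forall>f\<in>Bs.
        nw (\<lambda>x. L \<omega> \<epsilon> f x - L \<omega> 0 f x) \<le> C2 \<omega> * \<bar>\<epsilon>\<bar> * ns f"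
    and H4a: "AE \<omega> in P.
           (\<forall>f\<in>Bss. \<forall>g\<in>Bss. Lhat \<omega> (\<lambda>x. f x + g x) = (\<lambda>x. Lhat \<omega> f x + Lhat \<omega> g x)) \<and>
           (\<forall>c. \<forall>f\<in>Bss. Lhat \<omega> (\<lambda>x. c * f x) = (\<lambda>x. c * Lhat \<omega> f x)) \<and>
           (\<forall>f\<in>Bss. Lhat \<omega> f \<in> Bs \<and> (\<integral>x. Lhat \<omega> f x \<partial>m) = 0) \<and>
           (\<forall>f\<in>Bss. ns (Lhat \<omega> f) \<le> C3 \<omega> * nss f)"
    and H4b: "\<forall>\<epsilon>\<in>I - {0}. \<forall>\<omega>\<in>Om \<epsilon>. \<forall>f\<in>Bss.
           ns (\<lambda>x. (L \<omega> \<epsilon> f x - L \<omega> 0 f x) / \<epsilon> - Lhat \<omega> f x) \<le> C3 \<omega> * \<bar>\<epsilon>\<bar> * nss f"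
    and H5a: "\<forall>\<epsilon>\<in>I. (\<lambda>(\<omega>, x). h \<epsilon> \<omega> x) \<in> borel_measurable (P \<Otimes>\<^sub>M m)"
    and H5b: "\<forall>\<epsilon>\<in>I. \<forall>\<omega>\<in>Om \<epsilon>. h \<epsilon> \<omega> \<in> Bss \<and> (\<forall>x\<in>space m. h \<epsilon> \<omega> x \<ge> 0) \<and>
         L \<omega> \<epsilon> (h \<epsilon> \<omega>) = h \<epsilon> (\<sigma> \<omega>) \<and> (\<integral>x. h \<epsilon> \<omega> x \<partial>m) = 1 \<and>
         nss (h \<epsilon> \<omega>) \<le> C4 \<omega>"
    and \<Phi>: "(\<lambda>(\<omega>, x). \<Phi> \<omega> x) \<in> borel_measurable (P \<Otimes>\<^sub>M m)"
      "\<forall>\<omega>\<in>space P. Linf_norm m (\<Phi> \<omega>) < \<infinity>"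
      "Lp_fun P p6 (\<lambda>\<omega>. real_of_ereal (Linf_norm m (\<Phi> \<omega>)))" "p6 > 0"
      "1/p6 + 1/p1 + 1/p3 + 1/p4 \<le> 1"
begin

abbreviation "s \<equiv> sinv P \<sigma>"

sublocale P: prob_space P by (rule P)
sublocale m: prob_space m by (rule m)

lemma bij: "bij_betw \<sigma> (space P) (space P)" and \<sigma>_meas: "\<sigma> \<in> measurable P P"
  and s_meas: "s \<in> measurable P P"
  and \<sigma>_pres: "\<And>A. A \<in> sets P \<Longrightarrow> measure P (\<sigma> -` A \<inter> space P) = measure P A"
  using \<sigma> unfolding invertible_mp_def sinv_def by auto

lemma s_space: "\<omega> \<in> space P \<Longrightarrow> s \<omega> \<in> space P"
  using bij unfolding sinv_def bij_betw_def by (metis inv_into_into)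

lemma \<sigma>_space: "\<omega> \<in> space P \<Longrightarrow> \<sigma> \<omega> \<in> space P"
  using bij unfolding bij_betw_def by auto

lemma \<sigma>_s: "\<omega> \<in> space P \<Longrightarrow> \<sigma> (s \<omega>) = \<omega>"
  using bij unfolding sinv_def bij_betw_def by (metis f_inv_into_f)

lemma s_\<sigma>: "\<omega> \<in> space P \<Longrightarrow> s (\<sigma> \<omega>) = \<omega>"
  using bij unfolding sinv_def bij_betw_def by (metis inv_into_f_f)

lemma sk_space: "\<omega> \<in> space P \<Longrightarrow> (s ^^ k) \<omega> \<in> space P"
  by (induction k) (auto simp: s_space)

lemma \<sigma>_sk: "\<omega> \<in> space P \<Longrightarrow> \<sigma> ((s ^^ Suc k) \<omega>) = (s ^^ k) \<omega>"
  using \<sigma>_s sk_space by simp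

lemma \<sigma>j_sk: "\<omega> \<in> space P \<Longrightarrow> j \<le> k \<Longrightarrow> (\<sigma> ^^ j) ((s ^^ k) \<omega>) = (s ^^ (k - j)) \<omega>"
proof (induction j)
  case 0 then show ?case by simp
next
  case (Suc j)
  then have e1: "(\<sigma> ^^ Suc j) ((s ^^ k) \<omega>) = \<sigma> ((s ^^ (k - j)) \<omega>)" by simp
  have "k - j = Suc (k - Suc j)" using Suc.prems by simp
  then have "\<sigma> ((s ^^ (k - j)) \<omega>) = (s ^^ (k - Suc j)) \<omega>" using \<sigma>_sk[OF Suc.prems(1), of "k - Suc j"] by simp
  then show ?case using e1 by simp
qed

lemma s_image: "A \<in> sets P \<Longrightarrow> s -` A \<inter> space P = \<sigma> ` A"
proof -
  assume A: "A \<in> sets P"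
  then have As: "A \<subseteq> space P" by (rule sets.sets_into_space)
  show ?thesis
  proof
    show "s -` A \<inter> space P \<subseteq> \<sigma> ` A"
    proof
      fix x assume "x \<in> s -` A \<inter> space P"
      then show "x \<in> \<sigma> ` A" using \<sigma>_s[of x] by (metis IntE image_eqI vimageE)
    qed
    show "\<sigma> ` A \<subseteq> s -` A \<inter> space P"
    proof
      fix y assume "y \<in> \<sigma> ` A"
      then obtain x where x: "x \<in> A" "y = \<sigma> x" by blast
      then have "x \<in> space P" using As by blast
      then show "y \<in> s -` A \<inter> space P" using x s_\<sigma>[of x] \<sigma>_space[of x] by simp
    qed
  qed
qed

lemma distr_s: "distr P P s = P"
proof (rule measure_eqI)
  show "sets (distr P P s) = sets P" by simp
  fix A assume "A \<in> sets (distr P P s)"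
  then have A: "A \<in> sets P" by simp
  then have As: "A \<subseteq> space P" by (rule sets.sets_into_space)
  have e1: "s -` A \<inter> space P \<in> sets P" using s_meas A by (rule measurable_sets)
  have "\<sigma> -` (\<sigma> ` A) \<inter> space P = A"
    using As bij unfolding bij_betw_def inj_on_def by auto
  then have "measure P A = measure P (\<sigma> ` A)"
    using \<sigma>_pres[of "\<sigma> ` A"] e1 s_image[OF A] by simp
  have "emeasure (distr P P s) A = emeasure P (s -` A \<inter> space P)"
    by (rule emeasure_distr[OF s_meas A])
  also have "\<dots> = emeasure P (\<sigma> ` A)" using s_image[OF A] by simp
  also have "\<dots> = emeasure P A" using \<open>measure P A = measure P (\<sigma> ` A)\<close>
    by (simp add: P.emeasure_eq_measure)
  finally show "emeasure (distr P P s) A = emeasure P A" .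
qed

lemma sk_meas: "(s ^^ k) \<in> measurable P P"
proof (induction k)
  case 0 show ?case unfolding funpow.simps by (rule measurable_ident)
next
  case (Suc k) show ?case unfolding funpow.simps by (rule measurable_comp[OF Suc.IH s_meas])
qed

lemma distr_sk: "distr P P (s ^^ k) = P"
proof (induction k)
  case 0 show ?case unfolding funpow.simps id_def by (rule distr_id)
next
  case (Suc k)
  have "distr (distr P P (s ^^ k)) P s = distr P P (s \<circ> s ^^ k)"
    by (rule distr_distr[OF s_meas sk_meas])
  then show ?case unfolding funpow.simps(2)[symmetric] Suc.IH distr_s by (rule sym)
qed

lemma AE_shift: "(AE \<omega> in P. Q \<omega>) \<Longrightarrow> AE \<omega> in P. Q ((s ^^ k) \<omega>)"
proof -
  assume "AE \<omega> in P. Q \<omega>"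
  then have "AE \<omega> in distr P P (s ^^ k). Q \<omega>" by (simp only: distr_sk)
  then show ?thesis by (rule AE_distrD[OF sk_meas])
qed

lemma nn_shift: "f \<in> borel_measurable P \<Longrightarrow> (\<integral>\<^sup>+\<omega>. f ((s ^^ k) \<omega>) \<partial>P) = (\<integral>\<^sup>+\<omega>. f \<omega> \<partial>P)"
  using nn_integral_distr[OF sk_meas, of f] by (simp add: distr_sk)

end

context ctx begin

definition "G \<omega> = real_of_ereal (Linf_norm m (\<Phi> \<omega>))"
definition "phi \<omega> f = (\<integral>x. \<Phi> \<omega> x * f x \<partial>m)"

lemma Phi_meas: "\<omega> \<in> space P \<Longrightarrow> \<Phi> \<omega> \<in> borel_measurable m"
  using measurable_Pair2[OF \<Phi>(1), of \<omega>] by simp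

lemma Phi_AE: assumes "\<omega> \<in> space P" shows "G \<omega> \<ge> 0" "AE x in m. \<bar>\<Phi> \<omega> x\<bar> \<le> G \<omega>"
proof -
  have ae: "AE x in m. ereal \<bar>\<Phi> \<omega> x\<bar> \<le> Linf_norm m (\<Phi> \<omega>)"
    unfolding Linf_norm_def by (rule esssup_AE)
  have fin: "Linf_norm m (\<Phi> \<omega>) < \<infinity>" using \<Phi>(2) assms by blast
  have nn: "Linf_norm m (\<Phi> \<omega>) \<ge> 0"
  proof (rule ccontr)
    assume "\<not> Linf_norm m (\<Phi> \<omega>) \<ge> 0"
    then have neg: "Linf_norm m (\<Phi> \<omega>) < 0" by simp
    have "AE x in m. False" using ae
      by (rule eventually_mono) (use neg in \<open>metis abs_ge_zero ereal_less_eq(5) order.trans not_le\<close>)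
    then show False using m.AE_False by simp
  qed
  then have eq: "Linf_norm m (\<Phi> \<omega>) = ereal (G \<omega>)" unfolding G_def using fin
    using nn by (cases "Linf_norm m (\<Phi> \<omega>)") auto
  show "G \<omega> \<ge> 0" using nn unfolding G_def by (simp add: real_of_ereal_pos)
  show "AE x in m. \<bar>\<Phi> \<omega> x\<bar> \<le> G \<omega>" using ae unfolding eq by simp
qed

lemma Bw_meas: "f \<in> Bw \<Longrightarrow> f \<in> borel_measurable m"
  using spw unfolding fun_banach_def by blast

lemma phi_int: assumes "\<omega> \<in> space P" "f \<in> Bw" shows "integrable m (\<lambda>x. \<Phi> \<omega> x * f x)"
proof (rule Bochner_Integration.integrable_bound)
  show "integrable m (\<lambda>x. G \<omega> * f x)" using intw assms by simp
  show "(\<lambda>x. \<Phi> \<omega> x * f x) \<in> borel_measurable m"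
    using Phi_meas[OF assms(1)] Bw_meas[OF assms(2)] by measurable
  show "AE x in m. norm (\<Phi> \<omega> x * f x) \<le> norm (G \<omega> * f x)"
    using Phi_AE(2)[OF assms(1)] by eventually_elim (auto simp: abs_mult intro: mult_right_mono)
qed

lemma phi_L1: assumes "\<omega> \<in> space P" "f \<in> Bw" shows "\<bar>phi \<omega> f\<bar> \<le> G \<omega> * L1norm m f"
proof -
  have "\<bar>phi \<omega> f\<bar> \<le> (\<integral>x. \<bar>\<Phi> \<omega> x * f x\<bar> \<partial>m)"
    unfolding phi_def using integral_abs_bound by blast
  also have "\<dots> \<le> (\<integral>x. G \<omega> * \<bar>f x\<bar> \<partial>m)"
  proof (rule integral_mono_AE)
    show "integrable m (\<lambda>x. \<bar>\<Phi> \<omega> x * f x\<bar>)" using phi_int[OF assms] by simp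
    show "integrable m (\<lambda>x. G \<omega> * \<bar>f x\<bar>)" using intw assms by simp
    show "AE x in m. \<bar>\<Phi> \<omega> x * f x\<bar> \<le> G \<omega> * \<bar>f x\<bar>"
      using Phi_AE(2)[OF assms(1)] by eventually_elim (auto simp: abs_mult intro: mult_right_mono)
  qed
  also have "\<dots> = G \<omega> * L1norm m f" unfolding L1norm_def by simp
  finally show ?thesis .
qed

lemma phi_bound: assumes "\<omega> \<in> space P" "f \<in> Bw" shows "\<bar>phi \<omega> f\<bar> \<le> G \<omega> * nw f"
  using phi_L1[OF assms] L1w assms Phi_AE(1)[OF assms(1)]
  by (meson mult_left_mono order.trans)

lemma phi_add: assumes "\<omega> \<in> space P" "f \<in> Bw" "g \<in> Bw"
  shows "phi \<omega> (\<lambda>x. f x + g x) = phi \<omega> f + phi \<omega> g"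
  unfolding phi_def using phi_int[OF assms(1,2)] phi_int[OF assms(1,3)]
  by (simp add: distrib_left)

lemma phi_minus: assumes "\<omega> \<in> space P" "f \<in> Bw" "g \<in> Bw"
  shows "phi \<omega> (\<lambda>x. f x - g x) = phi \<omega> f - phi \<omega> g"
  unfolding phi_def using phi_int[OF assms(1,2)] phi_int[OF assms(1,3)]
  by (simp add: right_diff_distrib)

lemma phi_div: "phi \<omega> (\<lambda>x. f x / c) = phi \<omega> f / c"
  unfolding phi_def by (simp add: integral_divide_zero)

lemma phi_h: assumes "\<epsilon> \<in> I" "\<omega> \<in> Om \<epsilon>" shows "\<bar>phi \<omega> (h \<epsilon> \<omega>)\<bar> \<le> G \<omega>"
proof -
  have sp: "\<omega> \<in> space P" using Om assms sets.sets_into_space by blast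
  have hB: "h \<epsilon> \<omega> \<in> Bw" using H5b assms sub1 sub2 by blast
  have nn: "\<forall>x\<in>space m. 0 \<le> h \<epsilon> \<omega> x" using H5b assms by blast
  have "L1norm m (h \<epsilon> \<omega>) = (\<integral>x. h \<epsilon> \<omega> x \<partial>m)" unfolding L1norm_def
    by (rule Bochner_Integration.integral_cong[OF refl]) (use nn in auto)
  also have "\<dots> = 1" using H5b assms by blast
  finally show ?thesis using phi_L1[OF sp hB] by simp
qed

end

context ctx begin

lemma Om_space: "\<epsilon> \<in> I \<Longrightarrow> Om \<epsilon> \<subseteq> space P"
  using Om sets.sets_into_space by blast

lemma zero_I: "0 \<in> I" using I by simp

lemma eps_le1: "\<epsilon> \<in> I \<Longrightarrow> \<bar>\<epsilon>\<bar> \<le> 1" using I by auto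

lemma linw: "\<epsilon> \<in> I \<Longrightarrow> \<omega> \<in> space P \<Longrightarrow> lin_on Bw (L \<omega> \<epsilon>)"
  using L_bounded bounded_op_lin by blast
lemma lins: "\<epsilon> \<in> I \<Longrightarrow> \<omega> \<in> space P \<Longrightarrow> lin_on Bs (L \<omega> \<epsilon>)"
  using L_bounded bounded_op_lin by blast
lemma linss: "\<epsilon> \<in> I \<Longrightarrow> \<omega> \<in> space P \<Longrightarrow> lin_on Bss (L \<omega> \<epsilon>)"
  using L_bounded bounded_op_lin by blast

lemma sigj_space: "\<omega> \<in> space P \<Longrightarrow> (\<sigma> ^^ j) \<omega> \<in> space P"
  by (induction j) (auto simp: \<sigma>_space)

lemma coc_lin:
  assumes "\<And>y. y \<in> space P \<Longrightarrow> lin_on B (L y \<epsilon>)" "y \<in> space P"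
  shows "lin_on B (cocycle L \<sigma> k y \<epsilon>)"
  by (rule cocycle_lin) (use assms sigj_space in auto)

abbreviation "Lam \<epsilon> k \<omega> \<equiv> cocycle L \<sigma> k ((s ^^ k) \<omega>) \<epsilon>"

lemma Lam_linw: "\<epsilon> \<in> I \<Longrightarrow> \<omega> \<in> space P \<Longrightarrow> lin_on Bw (Lam \<epsilon> k \<omega>)"
  by (rule coc_lin) (auto simp: linw sk_space)
lemma Lam_lins: "\<epsilon> \<in> I \<Longrightarrow> \<omega> \<in> space P \<Longrightarrow> lin_on Bs (Lam \<epsilon> k \<omega>)"
  by (rule coc_lin) (auto simp: lins sk_space)

lemma Lam_Suc: "\<omega> \<in> space P \<Longrightarrow> Lam \<epsilon> (Suc k) \<omega> = Lam \<epsilon> k \<omega> \<circ> L ((s ^^ Suc k) \<omega>) \<epsilon>"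
  using cocycle_left[of L \<sigma> k "(s ^^ Suc k) \<omega>" \<epsilon>] \<sigma>_sk[of \<omega> k] by simp

definition good :: "real \<Rightarrow> 'w \<Rightarrow> bool" where
  "good \<epsilon> \<omega> \<longleftrightarrow> \<omega> \<in> space P \<and> (\<forall>k. (s ^^ k) \<omega> \<in> Om \<epsilon>)"

lemma good_Om: "good \<epsilon> \<omega> \<Longrightarrow> (s ^^ k) \<omega> \<in> Om \<epsilon>" unfolding good_def by blast
lemma good_Om0: "good \<epsilon> \<omega> \<Longrightarrow> \<omega> \<in> Om \<epsilon>" using good_Om[of \<epsilon> \<omega> 0] by simp
lemma good_sp: "good \<epsilon> \<omega> \<Longrightarrow> \<omega> \<in> space P" unfolding good_def by blast

lemma Lam_H1:
  assumes "\<epsilon> \<in> I" "good \<epsilon> \<omega>" "f \<in> Bw"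
  shows "nw (Lam \<epsilon> k \<omega> f) \<le> max 1 \<bar>C0 \<omega>\<bar> * nw f"
proof (cases "k = 0")
  case True
  then show ?thesis using fb_nonneg[OF spw assms(3)] by (simp add: mult_le_cancel_right1)
next
  case False
  then have "nw (Lam \<epsilon> k \<omega> f) \<le> C0 \<omega> * nw f"
    using H1 assms good_Om0[OF assms(2)] unfolding sinv_def by auto
  also have "\<dots> \<le> max 1 \<bar>C0 \<omega>\<bar> * nw f"
    using fb_nonneg[OF spw assms(3)] by (intro mult_right_mono) auto
  finally show ?thesis .
qed

lemma Lam_H2:
  assumes "\<epsilon> \<in> I" "good \<epsilon> \<omega>" "k \<ge> 1" "f \<in> Bs" "(\<integral>x. f x \<partial>m) = 0"
  shows "nw (Lam \<epsilon> k \<omega> f) \<le> \<bar>C1 ((s ^^ k) \<omega>)\<bar> * real k powr (-\<beta>) * ns f"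
proof -
  have "nw (Lam \<epsilon> k \<omega> f) \<le> C1 ((s ^^ k) \<omega>) * real k powr (-\<beta>) * ns f"
    using H2 assms good_Om[OF assms(2)] by blast
  also have "\<dots> \<le> \<bar>C1 ((s ^^ k) \<omega>)\<bar> * real k powr (-\<beta>) * ns f"
    using fb_nonneg[OF sps assms(4)] by (intro mult_right_mono) auto
  finally show ?thesis .
qed

definition "hdf \<epsilon> \<omega> j = (\<lambda>x. h \<epsilon> ((s ^^ j) \<omega>) x - h 0 ((s ^^ j) \<omega>) x)"
definition "uu \<epsilon> \<omega> j = (\<lambda>x. L ((s ^^ j) \<omega>) \<epsilon> (h 0 ((s ^^ j) \<omega>)) x - L ((s ^^ j) \<omega>) 0 (h 0 ((s ^^ j) \<omega>)) x)"

lemma h_props: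
  assumes "\<epsilon> \<in> I" "good \<epsilon> \<omega>"
  shows "h \<epsilon> ((s ^^ j) \<omega>) \<in> Bss" "h \<epsilon> ((s ^^ j) \<omega>) \<in> Bs" "h \<epsilon> ((s ^^ j) \<omega>) \<in> Bw"
    "L ((s ^^ j) \<omega>) \<epsilon> (h \<epsilon> ((s ^^ j) \<omega>)) = h \<epsilon> (\<sigma> ((s ^^ j) \<omega>))"
    "(\<integral>x. h \<epsilon> ((s ^^ j) \<omega>) x \<partial>m) = 1"
    "nss (h \<epsilon> ((s ^^ j) \<omega>)) \<le> C4 ((s ^^ j) \<omega>)"
  using H5b assms(1) good_Om[OF assms(2), of j] sub1 sub2 by blast+

lemma hdf_mem: "\<epsilon> \<in> I \<Longrightarrow> good \<epsilon> \<omega> \<Longrightarrow> good 0 \<omega> \<Longrightarrow> hdf \<epsilon> \<omega> j \<in> Bss"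
  unfolding hdf_def by (rule fb_minus[OF spss h_props(1) h_props(1)[OF zero_I]])

lemma uu_mem: assumes "\<epsilon> \<in> I" "good \<epsilon> \<omega>" "good 0 \<omega>" shows "uu \<epsilon> \<omega> j \<in> Bss"
proof -
  have sp: "(s ^^ j) \<omega> \<in> space P" using sk_space good_sp assms by blast
  show ?thesis unfolding uu_def
    by (rule fb_minus[OF spss lin_on_mem[OF linss[OF assms(1) sp]] lin_on_mem[OF linss[OF zero_I sp]]])
       (rule h_props(1)[OF zero_I assms(3)])+
qed

lemma hdf_step:
  assumes "\<epsilon> \<in> I" "good \<epsilon> \<omega>" "good 0 \<omega>"
  shows "hdf \<epsilon> \<omega> j = (\<lambda>x. L ((s ^^ Suc j) \<omega>) \<epsilon> (hdf \<epsilon> \<omega> (Suc j)) x + uu \<epsilon> \<omega> (Suc j) x)"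
proof -
  define y where "y = (s ^^ Suc j) \<omega>"
  have sp: "y \<in> space P" unfolding y_def using sk_space good_sp assms by blast
  have sy: "\<sigma> y = (s ^^ j) \<omega>" unfolding y_def using \<sigma>_sk good_sp assms by blast
  have e1: "L y \<epsilon> (hdf \<epsilon> \<omega> (Suc j)) = (\<lambda>x. L y \<epsilon> (h \<epsilon> y) x - L y \<epsilon> (h 0 y) x)"
    unfolding hdf_def y_def[symmetric]
    using h_props(3)[OF assms(1,2), of "Suc j"] h_props(3)[OF zero_I assms(3), of "Suc j"]
    by (intro lin_on_minus[OF spw linw[OF assms(1) sp]]) (auto simp: y_def)
  have e2: "L y \<epsilon> (h \<epsilon> y) = h \<epsilon> (\<sigma> y)" using h_props(4)[OF assms(1,2), of "Suc j"] by (simp add: y_def)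
  have e3: "L y 0 (h 0 y) = h 0 (\<sigma> y)" using h_props(4)[OF zero_I assms(3), of "Suc j"] by (simp add: y_def)
  show ?thesis unfolding y_def[symmetric] e1 e2 uu_def e3 sy
    by (simp add: hdf_def)
qed

lemma Lam_Suc_app: "\<omega> \<in> space P \<Longrightarrow> Lam \<epsilon> (Suc k) \<omega> f = Lam \<epsilon> k \<omega> (L ((s ^^ Suc k) \<omega>) \<epsilon> f)"
  using Lam_Suc by simp

lemma decomp:
  assumes "\<epsilon> \<in> I" "good \<epsilon> \<omega>" "good 0 \<omega>"
  shows "phi \<omega> (hdf \<epsilon> \<omega> 0) = phi \<omega> (Lam \<epsilon> n \<omega> (hdf \<epsilon> \<omega> n)) + (\<Sum>k<n. phi \<omega> (Lam \<epsilon> k \<omega> (uu \<epsilon> \<omega> (Suc k))))"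
proof (induction n)
  case 0 then show ?case by simp
next
  case (Suc n)
  have sp: "\<omega> \<in> space P" using good_sp assms by blast
  define y where "y = (s ^^ Suc n) \<omega>"
  have spy: "y \<in> space P" unfolding y_def using sk_space sp by blast
  have m1: "L y \<epsilon> (hdf \<epsilon> \<omega> (Suc n)) \<in> Bw"
    using hdf_mem[OF assms] sub1 sub2 linw[OF assms(1) spy] lin_on_mem by blast
  have m2: "uu \<epsilon> \<omega> (Suc n) \<in> Bw" using uu_mem[OF assms] sub1 sub2 by blast
  have "Lam \<epsilon> n \<omega> (hdf \<epsilon> \<omega> n) = Lam \<epsilon> n \<omega> (\<lambda>x. L y \<epsilon> (hdf \<epsilon> \<omega> (Suc n)) x + uu \<epsilon> \<omega> (Suc n) x)"
    using hdf_step[OF assms, of n] by (simp add: y_def)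
  also have "\<dots> = (\<lambda>x. Lam \<epsilon> n \<omega> (L y \<epsilon> (hdf \<epsilon> \<omega> (Suc n))) x + Lam \<epsilon> n \<omega> (uu \<epsilon> \<omega> (Suc n)) x)"
    by (rule lin_on_add[OF Lam_linw[OF assms(1) sp] m1 m2])
  also have "\<dots> = (\<lambda>x. Lam \<epsilon> (Suc n) \<omega> (hdf \<epsilon> \<omega> (Suc n)) x + Lam \<epsilon> n \<omega> (uu \<epsilon> \<omega> (Suc n)) x)"
    using Lam_Suc_app[OF sp, where k=n] by (simp add: y_def)
  finally have eq: "Lam \<epsilon> n \<omega> (hdf \<epsilon> \<omega> n) = \<dots>" .
  have "phi \<omega> (Lam \<epsilon> n \<omega> (hdf \<epsilon> \<omega> n)) = phi \<omega> (Lam \<epsilon> (Suc n) \<omega> (hdf \<epsilon> \<omega> (Suc n))) + phi \<omega> (Lam \<epsilon> n \<omega> (uu \<epsilon> \<omega> (Suc n)))"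
    unfolding eq
    using hdf_mem[OF assms] m2 sub1 sub2 Lam_linw[OF assms(1) sp] lin_on_mem
    by (intro phi_add sp) blast+
  then show ?case using Suc.IH by simp
qed

end

context ctx begin

lemma hdf_int0: assumes "\<epsilon> \<in> I" "good \<epsilon> \<omega>" "good 0 \<omega>" shows "(\<integral>x. hdf \<epsilon> \<omega> j x \<partial>m) = 0"
proof -
  have i1: "integrable m (h \<epsilon> ((s ^^ j) \<omega>))" using intw h_props(3)[OF assms(1,2)] by blast
  have i2: "integrable m (h 0 ((s ^^ j) \<omega>))" using intw h_props(3)[OF zero_I assms(3)] by blast
  show ?thesis unfolding hdf_def
    using h_props(5)[OF assms(1,2)] h_props(5)[OF zero_I assms(3)] by (simp add: Bochner_Integration.integral_diff[OF i1 i2])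
qed

lemma hdf_ns: assumes "\<epsilon> \<in> I" "good \<epsilon> \<omega>" "good 0 \<omega>" shows "ns (hdf \<epsilon> \<omega> j) \<le> 2 * \<bar>C4 ((s ^^ j) \<omega>)\<bar>"
proof -
  have "ns (hdf \<epsilon> \<omega> j) \<le> ns (h \<epsilon> ((s ^^ j) \<omega>)) + ns (h 0 ((s ^^ j) \<omega>))"
    unfolding hdf_def by (rule fb_tri_minus[OF sps h_props(2)[OF assms(1,2)] h_props(2)[OF zero_I assms(3)]])
  also have "\<dots> \<le> nss (h \<epsilon> ((s ^^ j) \<omega>)) + nss (h 0 ((s ^^ j) \<omega>))"
    using sss h_props(1)[OF assms(1,2)] h_props(1)[OF zero_I assms(3)] by (intro add_mono) blast+
  also have "\<dots> \<le> 2 * \<bar>C4 ((s ^^ j) \<omega>)\<bar>"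
    using h_props(6)[OF assms(1,2), of j] h_props(6)[OF zero_I assms(3), of j] by linarith
  finally show ?thesis .
qed

definition "Rem \<omega> n = G \<omega> * (\<bar>C1 ((s ^^ n) \<omega>)\<bar> * real n powr (-\<beta>) * (2 * \<bar>C4 ((s ^^ n) \<omega>)\<bar>))"

lemma rem_bound:
  assumes "\<epsilon> \<in> I" "good \<epsilon> \<omega>" "good 0 \<omega>" "n \<ge> 1"
  shows "\<bar>phi \<omega> (Lam \<epsilon> n \<omega> (hdf \<epsilon> \<omega> n))\<bar> \<le> Rem \<omega> n"
proof -
  have sp: "\<omega> \<in> space P" using good_sp assms by blast
  have hB: "hdf \<epsilon> \<omega> n \<in> Bs" using hdf_mem[OF assms(1-3)] sub1 by blast
  have LB: "Lam \<epsilon> n \<omega> (hdf \<epsilon> \<omega> n) \<in> Bw" using hB sub2 Lam_linw[OF assms(1) sp] lin_on_mem by blast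
  have G0: "G \<omega> \<ge> 0" using Phi_AE(1)[OF sp] .
  have "\<bar>phi \<omega> (Lam \<epsilon> n \<omega> (hdf \<epsilon> \<omega> n))\<bar> \<le> G \<omega> * nw (Lam \<epsilon> n \<omega> (hdf \<epsilon> \<omega> n))"
    by (rule phi_bound[OF sp LB])
  also have "\<dots> \<le> G \<omega> * (\<bar>C1 ((s ^^ n) \<omega>)\<bar> * real n powr (-\<beta>) * ns (hdf \<epsilon> \<omega> n))"
    using Lam_H2[OF assms(1,2,4) hB hdf_int0[OF assms(1-3)]] G0 by (rule mult_left_mono)
  also have "\<dots> \<le> Rem \<omega> n" unfolding Rem_def
    using hdf_ns[OF assms(1-3), of n] G0 by (intro mult_left_mono) auto
  finally show ?thesis .
qed

lemma series:
  assumes "\<epsilon> \<in> I" "good \<epsilon> \<omega>" "good 0 \<omega>" "Rem \<omega> \<longlonglongrightarrow> 0"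
  shows "(\<lambda>k. phi \<omega> (Lam \<epsilon> k \<omega> (uu \<epsilon> \<omega> (Suc k)))) sums phi \<omega> (hdf \<epsilon> \<omega> 0)"
proof -
  have r: "(\<lambda>n. phi \<omega> (Lam \<epsilon> n \<omega> (hdf \<epsilon> \<omega> n))) \<longlonglongrightarrow> 0"
  proof (rule Lim_null_comparison[OF _ assms(4)])
    show "\<forall>\<^sub>F n in sequentially. norm (phi \<omega> (Lam \<epsilon> n \<omega> (hdf \<epsilon> \<omega> n))) \<le> Rem \<omega> n"
      by (rule eventually_mono[OF eventually_ge_at_top[of 1]]) (use rem_bound[OF assms(1-3)] in auto)
  qed
  have "(\<lambda>n. phi \<omega> (hdf \<epsilon> \<omega> 0) - phi \<omega> (Lam \<epsilon> n \<omega> (hdf \<epsilon> \<omega> n))) \<longlonglongrightarrow> phi \<omega> (hdf \<epsilon> \<omega> 0) - 0"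
    by (intro tendsto_diff tendsto_const r)
  moreover have "(\<Sum>k<n. phi \<omega> (Lam \<epsilon> k \<omega> (uu \<epsilon> \<omega> (Suc k)))) = phi \<omega> (hdf \<epsilon> \<omega> 0) - phi \<omega> (Lam \<epsilon> n \<omega> (hdf \<epsilon> \<omega> n))" for n
    using decomp[OF assms(1-3), of n] by linarith
  ultimately show ?thesis unfolding sums_def by simp
qed

definition "D \<epsilon> \<omega> = (phi \<omega> (h \<epsilon> \<omega>) - phi \<omega> (h 0 \<omega>)) / \<epsilon>"
definition "aa \<epsilon> \<omega> k = phi \<omega> (Lam \<epsilon> k \<omega> (\<lambda>x. uu \<epsilon> \<omega> (Suc k) x / \<epsilon>))"

lemma D_sums:
  assumes "\<epsilon> \<in> I" "good \<epsilon> \<omega>" "good 0 \<omega>" "Rem \<omega> \<longlonglongrightarrow> 0"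
  shows "aa \<epsilon> \<omega> sums D \<epsilon> \<omega>"
proof -
  have sp: "\<omega> \<in> space P" using good_sp assms by blast
  have "phi \<omega> (hdf \<epsilon> \<omega> 0) = phi \<omega> (h \<epsilon> ((s ^^ 0) \<omega>)) - phi \<omega> (h 0 ((s ^^ 0) \<omega>))"
    unfolding hdf_def by (rule phi_minus[OF sp h_props(3)[OF assms(1,2)] h_props(3)[OF zero_I assms(3)]])
  then have e: "phi \<omega> (hdf \<epsilon> \<omega> 0) = phi \<omega> (h \<epsilon> \<omega>) - phi \<omega> (h 0 \<omega>)" by simp
  have "aa \<epsilon> \<omega> k = phi \<omega> (Lam \<epsilon> k \<omega> (uu \<epsilon> \<omega> (Suc k))) / \<epsilon>" for k
  proof -
    have "uu \<epsilon> \<omega> (Suc k) \<in> Bw" using uu_mem[OF assms(1-3)] sub1 sub2 by blast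
    then have "Lam \<epsilon> k \<omega> (\<lambda>x. uu \<epsilon> \<omega> (Suc k) x / \<epsilon>) = (\<lambda>x. Lam \<epsilon> k \<omega> (uu \<epsilon> \<omega> (Suc k)) x / \<epsilon>)"
      by (rule lin_on_div[OF Lam_linw[OF assms(1) sp]])
    then show ?thesis unfolding aa_def by (simp add: phi_div)
  qed
  then have "aa \<epsilon> \<omega> = (\<lambda>k. phi \<omega> (Lam \<epsilon> k \<omega> (uu \<epsilon> \<omega> (Suc k))) / \<epsilon>)" by (intro ext)
  then show ?thesis unfolding D_def e[symmetric]
    using sums_divide[OF series[OF assms], of \<epsilon>] by simp
qed

end

context ctx begin

definition LhOK :: "'w \<Rightarrow> bool" where
  "LhOK \<omega> \<longleftrightarrow> (\<forall>f\<in>Bss. \<forall>g\<in>Bss. Lhat \<omega> (\<lambda>x. f x + g x) = (\<lambda>x. Lhat \<omega> f x + Lhat \<omega> g x)) \<and>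
           (\<forall>c. \<forall>f\<in>Bss. Lhat \<omega> (\<lambda>x. c * f x) = (\<lambda>x. c * Lhat \<omega> f x)) \<and>
           (\<forall>f\<in>Bss. Lhat \<omega> f \<in> Bs \<and> (\<integral>x. Lhat \<omega> f x \<partial>m) = 0) \<and>
           (\<forall>f\<in>Bss. ns (Lhat \<omega> f) \<le> C3 \<omega> * nss f)"

lemma AE_LhOK: "AE \<omega> in P. LhOK \<omega>" unfolding LhOK_def by (rule H4a)

definition "ww \<epsilon> \<omega> k = (\<lambda>x. uu \<epsilon> \<omega> (Suc k) x / \<epsilon>)"
definition "vv \<omega> k = Lhat ((s ^^ Suc k) \<omega>) (h 0 ((s ^^ Suc k) \<omega>))"

lemma w_props:
  assumes e: "\<epsilon> \<in> I" "\<epsilon> \<noteq> 0" and g: "good \<epsilon> \<omega>" "good 0 \<omega>" and lh: "LhOK ((s ^^ Suc k) \<omega>)"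
  shows "ww \<epsilon> \<omega> k \<in> Bs" "(\<integral>x. ww \<epsilon> \<omega> k x \<partial>m) = 0"
    "vv \<omega> k \<in> Bs"
    "ns (\<lambda>x. ww \<epsilon> \<omega> k x - vv \<omega> k x) \<le> \<bar>C3 ((s ^^ Suc k) \<omega>)\<bar> * \<bar>C4 ((s ^^ Suc k) \<omega>)\<bar> * \<bar>\<epsilon>\<bar>"
    "ns (ww \<epsilon> \<omega> k) \<le> 2 * (\<bar>C3 ((s ^^ Suc k) \<omega>)\<bar> * \<bar>C4 ((s ^^ Suc k) \<omega>)\<bar>)"
proof -
  define y where "y = (s ^^ Suc k) \<omega>"
  define f where "f = h 0 y"
  have sp: "y \<in> space P" unfolding y_def using sk_space good_sp g by blast
  have yOm: "y \<in> Om \<epsilon>" unfolding y_def using good_Om[OF g(1)] .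
  have fss: "f \<in> Bss" unfolding f_def y_def by (rule h_props(1)[OF zero_I g(2)])
  have fnss: "nss f \<le> C4 y" unfolding f_def y_def by (rule h_props(6)[OF zero_I g(2)])
  have fnn: "nss f \<ge> 0" using fb_nonneg[OF spss fss] .
  have lh': "Lhat y f \<in> Bs" "(\<integral>x. Lhat y f x \<partial>m) = 0" "ns (Lhat y f) \<le> C3 y * nss f"
    using lh fss unfolding LhOK_def y_def by blast+
  have uuB: "uu \<epsilon> \<omega> (Suc k) \<in> Bs" using uu_mem[OF e(1) g] sub1 by blast
  show wB: "ww \<epsilon> \<omega> k \<in> Bs" unfolding ww_def by (rule fb_div[OF sps uuB])
  show "vv \<omega> k \<in> Bs" unfolding vv_def using lh'(1) by (simp add: y_def f_def)
  have fw: "f \<in> Bw" using fss sub1 sub2 by blast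
  have Lf1: "L y \<epsilon> f \<in> Bw" using lin_on_mem[OF linw[OF e(1) sp] fw] .
  have Lf0: "L y 0 f \<in> Bw" using lin_on_mem[OF linw[OF zero_I sp] fw] .
  have "(\<integral>x. uu \<epsilon> \<omega> (Suc k) x \<partial>m) = (\<integral>x. L y \<epsilon> f x \<partial>m) - (\<integral>x. L y 0 f x \<partial>m)"
    unfolding uu_def y_def[symmetric] f_def[symmetric]
    using intw Lf1 Lf0 by (intro Bochner_Integration.integral_diff) blast+
  also have "\<dots> = 0" using L_psi e(1) zero_I sp fw by simp
  finally show "(\<integral>x. ww \<epsilon> \<omega> k x \<partial>m) = 0" unfolding ww_def by (simp add: integral_divide_zero)
  have eqd: "(\<lambda>x. ww \<epsilon> \<omega> k x - vv \<omega> k x) = (\<lambda>x. (L y \<epsilon> f x - L y 0 f x) / \<epsilon> - Lhat y f x)"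
    unfolding ww_def vv_def uu_def y_def f_def ..
  have "ns (\<lambda>x. (L y \<epsilon> f x - L y 0 f x) / \<epsilon> - Lhat y f x) \<le> C3 y * \<bar>\<epsilon>\<bar> * nss f"
    using H4b e yOm fss by blast
  also have "\<dots> \<le> \<bar>C3 y\<bar> * \<bar>C4 y\<bar> * \<bar>\<epsilon>\<bar>"
  proof -
    have "C3 y * \<bar>\<epsilon>\<bar> * nss f \<le> \<bar>C3 y\<bar> * \<bar>\<epsilon>\<bar> * nss f" using fnn by (intro mult_right_mono) auto
    also have "\<dots> \<le> \<bar>C3 y\<bar> * \<bar>\<epsilon>\<bar> * \<bar>C4 y\<bar>" using fnss by (intro mult_left_mono) auto
    finally show ?thesis by (simp add: ac_simps)
  qed
  finally show d: "ns (\<lambda>x. ww \<epsilon> \<omega> k x - vv \<omega> k x) \<le> \<bar>C3 ((s ^^ Suc k) \<omega>)\<bar> * \<bar>C4 ((s ^^ Suc k) \<omega>)\<bar> * \<bar>\<epsilon>\<bar>"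
    unfolding eqd y_def .
  have vB: "vv \<omega> k \<in> Bs" unfolding vv_def using lh'(1) by (simp add: y_def f_def)
  have "ns (ww \<epsilon> \<omega> k) = ns (\<lambda>x. (\<lambda>x. ww \<epsilon> \<omega> k x - vv \<omega> k x) x + vv \<omega> k x)" by simp
  also have "\<dots> \<le> ns (\<lambda>x. ww \<epsilon> \<omega> k x - vv \<omega> k x) + ns (vv \<omega> k)"
    by (rule fb_tri[OF sps fb_minus[OF sps wB vB] vB])
  also have "ns (vv \<omega> k) \<le> \<bar>C3 y\<bar> * \<bar>C4 y\<bar>"
  proof -
    have "ns (vv \<omega> k) \<le> C3 y * nss f" using lh'(3) by (simp add: vv_def y_def f_def)
    also have "\<dots> \<le> \<bar>C3 y\<bar> * nss f" using fnn by (intro mult_right_mono) auto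
    also have "\<dots> \<le> \<bar>C3 y\<bar> * \<bar>C4 y\<bar>" using fnss by (intro mult_left_mono) auto
    finally show ?thesis .
  qed
  finally show "ns (ww \<epsilon> \<omega> k) \<le> 2 * (\<bar>C3 ((s ^^ Suc k) \<omega>)\<bar> * \<bar>C4 ((s ^^ Suc k) \<omega>)\<bar>)"
    using d eps_le1[OF e(1)] unfolding y_def[symmetric]
    by (smt (verit, best) abs_ge_zero mult_left_le mult_nonneg_nonneg)
qed

definition "bnd \<omega> k = G \<omega> * (if k = 0 then 1 else real k powr (-\<beta>) * \<bar>C1 ((s ^^ k) \<omega>)\<bar>) *
   (2 * (\<bar>C3 ((s ^^ Suc k) \<omega>)\<bar> * \<bar>C4 ((s ^^ Suc k) \<omega>)\<bar>))"

lemma aa_bound: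
  assumes e: "\<epsilon> \<in> I" "\<epsilon> \<noteq> 0" and g: "good \<epsilon> \<omega>" "good 0 \<omega>" and lh: "LhOK ((s ^^ Suc k) \<omega>)"
  shows "\<bar>aa \<epsilon> \<omega> k\<bar> \<le> bnd \<omega> k"
proof -
  have sp: "\<omega> \<in> space P" using good_sp g by blast
  have G0: "G \<omega> \<ge> 0" using Phi_AE(1)[OF sp] .
  note wp = w_props[OF e g lh]
  have wB: "ww \<epsilon> \<omega> k \<in> Bw" using wp(1) sub2 by blast
  have LB: "Lam \<epsilon> k \<omega> (ww \<epsilon> \<omega> k) \<in> Bw" using Lam_linw[OF e(1) sp] wB lin_on_mem by blast
  have "\<bar>aa \<epsilon> \<omega> k\<bar> \<le> G \<omega> * nw (Lam \<epsilon> k \<omega> (ww \<epsilon> \<omega> k))"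
    unfolding aa_def ww_def[symmetric] by (rule phi_bound[OF sp LB])
  also have "\<dots> \<le> G \<omega> * ((if k = 0 then 1 else real k powr (-\<beta>) * \<bar>C1 ((s ^^ k) \<omega>)\<bar>) * ns (ww \<epsilon> \<omega> k))"
  proof (intro mult_left_mono G0)
    show "nw (Lam \<epsilon> k \<omega> (ww \<epsilon> \<omega> k)) \<le> (if k = 0 then 1 else real k powr (-\<beta>) * \<bar>C1 ((s ^^ k) \<omega>)\<bar>) * ns (ww \<epsilon> \<omega> k)"
    proof (cases "k = 0")
      case True then show ?thesis using ws wp(1) by simp
    next
      case False
      then show ?thesis using Lam_H2[OF e(1) g(1) _ wp(1) wp(2), of k] by (simp add: ac_simps)
    qed
  qed
  also have "\<dots> \<le> G \<omega> * ((if k = 0 then 1 else real k powr (-\<beta>) * \<bar>C1 ((s ^^ k) \<omega>)\<bar>) * (2 * (\<bar>C3 ((s ^^ Suc k) \<omega>)\<bar> * \<bar>C4 ((s ^^ Suc k) \<omega>)\<bar>)))"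
    using wp(5) G0 by (intro mult_left_mono) auto
  also have "\<dots> = bnd \<omega> k" unfolding bnd_def by (simp only: mult.assoc)
  finally show ?thesis .
qed

end

context ctx begin

lemma Lam0: "Lam \<epsilon> 0 \<omega> f = f" by simp

lemma Lam_diff:
  assumes g0: "good 0 \<omega>"
  shows "\<forall>f\<in>Bs. \<exists>K. \<forall>\<epsilon>. \<epsilon> \<in> I \<and> good \<epsilon> \<omega> \<longrightarrow> nw (\<lambda>x. Lam \<epsilon> n \<omega> f x - Lam 0 n \<omega> f x) \<le> K * \<bar>\<epsilon>\<bar>"
proof (induction n)
  case 0
  show ?case by (intro ballI exI[of _ 0] allI impI) (simp add: fb_norm_zero[OF spw])
next
  case (Suc n)
  have sp: "\<omega> \<in> space P" using good_sp g0 by blast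
  show ?case
  proof
    fix f assume fB: "f \<in> Bs"
    define y where "y = (s ^^ Suc n) \<omega>"
    have spy: "y \<in> space P" unfolding y_def using sk_space sp by blast
    define g where "g = L y 0 f"
    have gB: "g \<in> Bs" unfolding g_def using lin_on_mem[OF lins[OF zero_I spy] fB] .
    obtain K where K: "\<And>\<epsilon>. \<epsilon> \<in> I \<Longrightarrow> good \<epsilon> \<omega> \<Longrightarrow> nw (\<lambda>x. Lam \<epsilon> n \<omega> g x - Lam 0 n \<omega> g x) \<le> K * \<bar>\<epsilon>\<bar>"
      using Suc.IH gB by blast
    define K' where "K' = max 1 \<bar>C0 \<omega>\<bar> * (\<bar>C2 y\<bar> * ns f) + K"
    show "\<exists>K. \<forall>\<epsilon>. \<epsilon> \<in> I \<and> good \<epsilon> \<omega> \<longrightarrow> nw (\<lambda>x. Lam \<epsilon> (Suc n) \<omega> f x - Lam 0 (Suc n) \<omega> f x) \<le> K * \<bar>\<epsilon>\<bar>"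
    proof (intro exI[of _ K'] allI impI, elim conjE)
      fix \<epsilon> assume e: "\<epsilon> \<in> I" and ge: "good \<epsilon> \<omega>"
      have yOm: "y \<in> Om \<epsilon>" unfolding y_def using good_Om[OF ge] .
      have LfB: "L y \<epsilon> f \<in> Bs" using lin_on_mem[OF lins[OF e spy] fB] .
      define dfn where "dfn = (\<lambda>x. L y \<epsilon> f x - g x)"
      have dB: "dfn \<in> Bs" unfolding dfn_def by (rule fb_minus[OF sps LfB gB])
      have e1: "Lam \<epsilon> (Suc n) \<omega> f = Lam \<epsilon> n \<omega> (L y \<epsilon> f)" unfolding y_def by (rule Lam_Suc_app[OF sp])
      have e2: "Lam 0 (Suc n) \<omega> f = Lam 0 n \<omega> g" unfolding y_def g_def by (rule Lam_Suc_app[OF sp])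
      have e3: "Lam \<epsilon> n \<omega> dfn = (\<lambda>x. Lam \<epsilon> n \<omega> (L y \<epsilon> f) x - Lam \<epsilon> n \<omega> g x)"
        unfolding dfn_def by (rule lin_on_minus[OF sps Lam_lins[OF e sp] LfB gB])
      have eq: "(\<lambda>x. Lam \<epsilon> (Suc n) \<omega> f x - Lam 0 (Suc n) \<omega> f x) =
          (\<lambda>x. Lam \<epsilon> n \<omega> dfn x + (\<lambda>x. Lam \<epsilon> n \<omega> g x - Lam 0 n \<omega> g x) x)"
        unfolding e1 e2 e3 by simp
      have m1: "Lam \<epsilon> n \<omega> dfn \<in> Bw" using lin_on_mem[OF Lam_lins[OF e sp] dB] sub2 by blast
      have m2: "(\<lambda>x. Lam \<epsilon> n \<omega> g x - Lam 0 n \<omega> g x) \<in> Bw"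
        using lin_on_mem[OF Lam_lins[OF e sp] gB] lin_on_mem[OF Lam_lins[OF zero_I sp] gB] sub2
        by (intro fb_minus[OF spw]) blast+
      have "nw (\<lambda>x. Lam \<epsilon> (Suc n) \<omega> f x - Lam 0 (Suc n) \<omega> f x) \<le> nw (Lam \<epsilon> n \<omega> dfn) + nw (\<lambda>x. Lam \<epsilon> n \<omega> g x - Lam 0 n \<omega> g x)"
        unfolding eq by (rule fb_tri[OF spw m1 m2])
      also have "\<dots> \<le> max 1 \<bar>C0 \<omega>\<bar> * (\<bar>C2 y\<bar> * ns f) * \<bar>\<epsilon>\<bar> + K * \<bar>\<epsilon>\<bar>"
      proof (rule add_mono[OF _ K[OF e ge]])
        have a1: "nw (Lam \<epsilon> n \<omega> dfn) \<le> max 1 \<bar>C0 \<omega>\<bar> * nw dfn"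
          using Lam_H1[OF e ge] dB sub2 by blast
        have "nw dfn \<le> C2 y * \<bar>\<epsilon>\<bar> * ns f" unfolding dfn_def g_def
          using H3 e yOm fB by blast
        also have "C2 y * \<bar>\<epsilon>\<bar> * ns f \<le> \<bar>C2 y\<bar> * \<bar>\<epsilon>\<bar> * ns f"
          using fb_nonneg[OF sps fB] by (intro mult_right_mono) auto
        also have "\<dots> = \<bar>C2 y\<bar> * ns f * \<bar>\<epsilon>\<bar>" by (simp add: ac_simps)
        finally have a2: "nw dfn \<le> \<bar>C2 y\<bar> * ns f * \<bar>\<epsilon>\<bar>" .
        have "max 1 \<bar>C0 \<omega>\<bar> * nw dfn \<le> max 1 \<bar>C0 \<omega>\<bar> * (\<bar>C2 y\<bar> * ns f * \<bar>\<epsilon>\<bar>)"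
          using a2 by (intro mult_left_mono) auto
        then show "nw (Lam \<epsilon> n \<omega> dfn) \<le> max 1 \<bar>C0 \<omega>\<bar> * (\<bar>C2 y\<bar> * ns f) * \<bar>\<epsilon>\<bar>"
          using a1 by (simp add: mult.assoc)
      qed
      also have "\<dots> = K' * \<bar>\<epsilon>\<bar>" unfolding K'_def by (simp add: algebra_simps)
      finally show "nw (\<lambda>x. Lam \<epsilon> (Suc n) \<omega> f x - Lam 0 (Suc n) \<omega> f x) \<le> K' * \<bar>\<epsilon>\<bar>" .
    qed
  qed
qed

end

context ctx begin

definition "a0 \<omega> k = phi \<omega> (Lam 0 k \<omega> (vv \<omega> k))"

lemma aa_conv:
  assumes X: "\<And>i. X i \<in> I" "\<And>i. X i \<noteq> 0" "\<And>i. good (X i) \<omega>" "X \<longlonglongrightarrow> 0"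
    and g0: "good 0 \<omega>" and lh: "LhOK ((s ^^ Suc k) \<omega>)"
  shows "(\<lambda>i. aa (X i) \<omega> k) \<longlonglongrightarrow> a0 \<omega> k"
proof -
  have sp: "\<omega> \<in> space P" using good_sp g0 by blast
  have G0: "G \<omega> \<ge> 0" using Phi_AE(1)[OF sp] .
  have vB: "vv \<omega> k \<in> Bs" using w_props(3)[OF X(1)[of 0] X(2)[of 0] X(3)[of 0] g0 lh] .
  obtain K where K: "\<And>\<epsilon>. \<epsilon> \<in> I \<Longrightarrow> good \<epsilon> \<omega> \<Longrightarrow> nw (\<lambda>x. Lam \<epsilon> k \<omega> (vv \<omega> k) x - Lam 0 k \<omega> (vv \<omega> k) x) \<le> K * \<bar>\<epsilon>\<bar>"
    using Lam_diff[OF g0, of k] vB by blast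
  define M where "M = G \<omega> * (max 1 \<bar>C0 \<omega>\<bar> * (\<bar>C3 ((s ^^ Suc k) \<omega>)\<bar> * \<bar>C4 ((s ^^ Suc k) \<omega>)\<bar>) + K)"
  have bound: "\<bar>aa (X i) \<omega> k - a0 \<omega> k\<bar> \<le> M * \<bar>X i\<bar>" for i
  proof -
    let ?e = "X i"
    note wp = w_props[OF X(1)[of i] X(2)[of i] X(3)[of i] g0 lh]
    have wB: "ww ?e \<omega> k \<in> Bs" using wp(1) .
    have dB: "(\<lambda>x. ww ?e \<omega> k x - vv \<omega> k x) \<in> Bs" by (rule fb_minus[OF sps wB vB])
    have l1: "lin_on Bs (Lam ?e k \<omega>)" by (rule Lam_lins[OF X(1)[of i] sp])
    have l0: "lin_on Bs (Lam 0 k \<omega>)" by (rule Lam_lins[OF zero_I sp])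
    have m1: "Lam ?e k \<omega> (ww ?e \<omega> k) \<in> Bw" using lin_on_mem[OF l1 wB] sub2 by blast
    have m0: "Lam 0 k \<omega> (vv \<omega> k) \<in> Bw" using lin_on_mem[OF l0 vB] sub2 by blast
    have mv: "Lam ?e k \<omega> (vv \<omega> k) \<in> Bw" using lin_on_mem[OF l1 vB] sub2 by blast
    have md: "Lam ?e k \<omega> (\<lambda>x. ww ?e \<omega> k x - vv \<omega> k x) \<in> Bw" using lin_on_mem[OF l1 dB] sub2 by blast
    have md2: "(\<lambda>x. Lam ?e k \<omega> (vv \<omega> k) x - Lam 0 k \<omega> (vv \<omega> k) x) \<in> Bw" by (rule fb_minus[OF spw mv m0])
    have e3: "Lam ?e k \<omega> (\<lambda>x. ww ?e \<omega> k x - vv \<omega> k x) = (\<lambda>x. Lam ?e k \<omega> (ww ?e \<omega> k) x - Lam ?e k \<omega> (vv \<omega> k) x)"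
      by (rule lin_on_minus[OF sps l1 wB vB])
    have eq: "(\<lambda>x. Lam ?e k \<omega> (ww ?e \<omega> k) x - Lam 0 k \<omega> (vv \<omega> k) x) =
       (\<lambda>x. Lam ?e k \<omega> (\<lambda>x. ww ?e \<omega> k x - vv \<omega> k x) x + (\<lambda>x. Lam ?e k \<omega> (vv \<omega> k) x - Lam 0 k \<omega> (vv \<omega> k) x) x)"
      unfolding e3 by simp
    have "aa ?e \<omega> k - a0 \<omega> k = phi \<omega> (\<lambda>x. Lam ?e k \<omega> (ww ?e \<omega> k) x - Lam 0 k \<omega> (vv \<omega> k) x)"
      unfolding aa_def a0_def ww_def[symmetric] by (rule phi_minus[OF sp m1 m0, symmetric])
    then have "\<bar>aa ?e \<omega> k - a0 \<omega> k\<bar> \<le> G \<omega> * nw (\<lambda>x. Lam ?e k \<omega> (ww ?e \<omega> k) x - Lam 0 k \<omega> (vv \<omega> k) x)"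
      using phi_bound[OF sp fb_minus[OF spw m1 m0]] by simp
    also have "nw (\<lambda>x. Lam ?e k \<omega> (ww ?e \<omega> k) x - Lam 0 k \<omega> (vv \<omega> k) x) \<le>
        nw (Lam ?e k \<omega> (\<lambda>x. ww ?e \<omega> k x - vv \<omega> k x)) + nw (\<lambda>x. Lam ?e k \<omega> (vv \<omega> k) x - Lam 0 k \<omega> (vv \<omega> k) x)"
      unfolding eq by (rule fb_tri[OF spw md md2])
    also have "\<dots> \<le> max 1 \<bar>C0 \<omega>\<bar> * (\<bar>C3 ((s ^^ Suc k) \<omega>)\<bar> * \<bar>C4 ((s ^^ Suc k) \<omega>)\<bar>) * \<bar>?e\<bar> + K * \<bar>?e\<bar>"
    proof (rule add_mono[OF _ K[OF X(1)[of i] X(3)[of i]]])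
      have a1: "nw (Lam ?e k \<omega> (\<lambda>x. ww ?e \<omega> k x - vv \<omega> k x)) \<le> max 1 \<bar>C0 \<omega>\<bar> * nw (\<lambda>x. ww ?e \<omega> k x - vv \<omega> k x)"
        using Lam_H1[OF X(1)[of i] X(3)[of i]] dB sub2 by blast
      have a2: "nw (\<lambda>x. ww ?e \<omega> k x - vv \<omega> k x) \<le> \<bar>C3 ((s ^^ Suc k) \<omega>)\<bar> * \<bar>C4 ((s ^^ Suc k) \<omega>)\<bar> * \<bar>?e\<bar>"
        using ws dB wp(4) by fastforce
      have "max 1 \<bar>C0 \<omega>\<bar> * nw (\<lambda>x. ww ?e \<omega> k x - vv \<omega> k x) \<le> max 1 \<bar>C0 \<omega>\<bar> * (\<bar>C3 ((s ^^ Suc k) \<omega>)\<bar> * \<bar>C4 ((s ^^ Suc k) \<omega>)\<bar> * \<bar>?e\<bar>)"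
        using a2 by (intro mult_left_mono) auto
      then show "nw (Lam ?e k \<omega> (\<lambda>x. ww ?e \<omega> k x - vv \<omega> k x)) \<le> max 1 \<bar>C0 \<omega>\<bar> * (\<bar>C3 ((s ^^ Suc k) \<omega>)\<bar> * \<bar>C4 ((s ^^ Suc k) \<omega>)\<bar>) * \<bar>?e\<bar>"
        using a1 by (simp add: mult.assoc)
    qed
    finally have "\<bar>aa ?e \<omega> k - a0 \<omega> k\<bar> \<le> G \<omega> * (max 1 \<bar>C0 \<omega>\<bar> * (\<bar>C3 ((s ^^ Suc k) \<omega>)\<bar> * \<bar>C4 ((s ^^ Suc k) \<omega>)\<bar>) * \<bar>?e\<bar> + K * \<bar>?e\<bar>)"
      using G0 by (simp add: mult_left_mono)
    then show ?thesis unfolding M_def by (simp add: algebra_simps)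
  qed
  have "(\<lambda>i. aa (X i) \<omega> k - a0 \<omega> k) \<longlonglongrightarrow> 0"
  proof (rule Lim_null_comparison)
    show "\<forall>\<^sub>F i in sequentially. norm (aa (X i) \<omega> k - a0 \<omega> k) \<le> M * \<bar>X i\<bar>"
      using bound by simp
    show "(\<lambda>i. M * \<bar>X i\<bar>) \<longlonglongrightarrow> 0"
      by (rule tendsto_mult_right_zero[OF tendsto_rabs_zero[OF X(4)]])
  qed
  then show ?thesis by (rule LIM_zero_cancel)
qed

lemma pointwise:
  assumes X: "\<And>i. X i \<in> I" "\<And>i. X i \<noteq> 0" "\<And>i. good (X i) \<omega>" "X \<longlonglongrightarrow> 0"
    and g0: "good 0 \<omega>" and lh: "\<And>k. LhOK ((s ^^ k) \<omega>)"
    and sb: "summable (bnd \<omega>)" and r: "Rem \<omega> \<longlonglongrightarrow> 0"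
  shows "(\<lambda>i. D (X i) \<omega>) \<longlonglongrightarrow> (\<Sum>k. a0 \<omega> k)"
proof -
  have D: "D (X i) \<omega> = (\<Sum>k. aa (X i) \<omega> k)" for i
    using sums_unique[OF D_sums[OF X(1,3) g0 r]] by simp
  have "eventually (\<lambda>n. summable (\<lambda>k. norm (aa (X n) \<omega> k))) sequentially \<and>
           summable (\<lambda>n. norm (a0 \<omega> n)) \<and>
           ((\<lambda>n. suminf (\<lambda>k. aa (X n) \<omega> k)) \<longlongrightarrow> suminf (a0 \<omega>)) sequentially"
  proof (rule tannerys_theorem[where M = "bnd \<omega>"])
    show "\<And>k. (\<lambda>n. aa (X n) \<omega> k) \<longlonglongrightarrow> a0 \<omega> k" using aa_conv[OF X g0 lh] .
    show "\<forall>\<^sub>F (k, n) in at_top \<times>\<^sub>F sequentially. norm (aa (X n) \<omega> k) \<le> bnd \<omega> k"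
      using aa_bound[OF X(1,2,3) g0 lh] by (intro always_eventually) auto
  qed (use sb in auto)
  then show ?thesis unfolding D by simp
qed

lemma dom:
  assumes e: "\<epsilon> \<in> I" "\<epsilon> \<noteq> 0" and g: "good \<epsilon> \<omega>" "good 0 \<omega>" and lh: "\<And>k. LhOK ((s ^^ k) \<omega>)"
    and sb: "summable (bnd \<omega>)" and r: "Rem \<omega> \<longlonglongrightarrow> 0"
  shows "\<bar>D \<epsilon> \<omega>\<bar> \<le> (\<Sum>k. bnd \<omega> k)"
proof -
  have "D \<epsilon> \<omega> = (\<Sum>k. aa \<epsilon> \<omega> k)" using sums_unique[OF D_sums[OF e(1) g r]] by simp
  moreover have "norm (\<Sum>k. aa \<epsilon> \<omega> k) \<le> (\<Sum>k. bnd \<omega> k)"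
    by (rule norm_suminf_le[OF _ sb]) (use aa_bound[OF e g lh] in auto)
  ultimately show ?thesis by simp
qed

end

lemma AE_summable_gen:
  fixes f :: "nat \<Rightarrow> 'a \<Rightarrow> real"
  assumes meas: "\<And>k. f k \<in> borel_measurable M" and nn: "\<And>k x. x \<in> space M \<Longrightarrow> 0 \<le> f k x"
    and int: "\<And>k. integrable M (f k)" and le: "\<And>k. integral\<^sup>L M (f k) \<le> c k" and sc: "summable c"
  shows "(\<integral>\<^sup>+x. (\<Sum>k. ennreal (f k x)) \<partial>M) < \<infinity>" "AE x in M. summable (\<lambda>k. f k x)"
proof -
  have ms: "(\<lambda>x. ennreal (f k x)) \<in> borel_measurable M" for k using meas[of k] by measurable
  have c0: "0 \<le> c k" for k
  proof -
    have "0 \<le> integral\<^sup>L M (f k)" by (intro integral_nonneg_AE AE_I2 nn)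
    then show ?thesis using le[of k] by linarith
  qed
  have "(\<integral>\<^sup>+x. (\<Sum>k. ennreal (f k x)) \<partial>M) = (\<Sum>k. \<integral>\<^sup>+x. ennreal (f k x) \<partial>M)"
    by (rule nn_integral_suminf[OF ms])
  also have "\<dots> = (\<Sum>k. ennreal (integral\<^sup>L M (f k)))"
    using int nn by (simp add: nn_integral_eq_integral AE_I2)
  also have "\<dots> \<le> (\<Sum>k. ennreal (c k))"
    by (intro suminf_le ennreal_leI le summableI)
  also have "\<dots> = ennreal (\<Sum>k. c k)" using suminf_ennreal2[OF c0 sc] by simp
  finally have "(\<integral>\<^sup>+x. (\<Sum>k. ennreal (f k x)) \<partial>M) \<le> ennreal (\<Sum>k. c k)" .
  then show fin: "(\<integral>\<^sup>+x. (\<Sum>k. ennreal (f k x)) \<partial>M) < \<infinity>"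
    by (metis ennreal_less_top infinity_ennreal_def order.strict_trans1)
  have "AE x in M. (\<Sum>k. ennreal (f k x)) \<noteq> \<infinity>"
    by (rule nn_integral_noteq_infinite) (use ms fin in auto)
  then show "AE x in M. summable (\<lambda>k. f k x)"
  proof (rule AE_mp, intro AE_I2 impI)
    fix x assume x: "x \<in> space M" and ne: "(\<Sum>k. ennreal (f k x)) \<noteq> \<infinity>"
    show "summable (\<lambda>k. f k x)" by (rule summable_suminf_not_top) (use nn[OF x] ne in auto)
  qed
qed

context ctx begin

lemma AE_good: assumes "\<epsilon> \<in> I" shows "AE \<omega> in P. good \<epsilon> \<omega>"
proof -
  have "AE \<omega> in P. \<omega> \<in> Om \<epsilon>" using Om assms P.AE_in_set_eq_1 by blast
  then have "\<And>k. AE \<omega> in P. (s ^^ k) \<omega> \<in> Om \<epsilon>" by (rule AE_shift)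
  then have "AE \<omega> in P. \<forall>k. (s ^^ k) \<omega> \<in> Om \<epsilon>" by (simp add: AE_all_countable)
  then show ?thesis unfolding good_def using AE_space by eventually_elim auto
qed

lemma AE_LhOK_all: "AE \<omega> in P. \<forall>k. LhOK ((s ^^ k) \<omega>)"
  using AE_shift[OF AE_LhOK] by (simp add: AE_all_countable)

lemma p6_ge1: "p6 \<ge> 1"
proof -
  have "1/p6 \<le> 1" using \<Phi>(5) Lp(4-6) by (smt (verit) divide_pos_pos)
  then show ?thesis using \<Phi>(4) by (simp add: field_simps)
qed

lemma G_meas: "G \<in> borel_measurable P"
  using \<Phi>(3) unfolding Lp_fun_def G_def by blast
lemma C1_meas: "C1 \<in> borel_measurable P" using Lp(1) unfolding Lp_fun_def by blast
lemma C3_meas: "C3 \<in> borel_measurable P" using Lp(2) unfolding Lp_fun_def by blast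
lemma C4_meas: "C4 \<in> borel_measurable P" using Lp(3) unfolding Lp_fun_def by blast

lemma int_G: "integrable P (\<lambda>\<omega>. \<bar>G \<omega>\<bar> powr p6)" using \<Phi>(3) unfolding Lp_fun_def G_def by blast
lemma int_C1: "integrable P (\<lambda>\<omega>. \<bar>C1 \<omega>\<bar> powr p1)" using Lp(1) unfolding Lp_fun_def by blast
lemma int_C3: "integrable P (\<lambda>\<omega>. \<bar>C3 \<omega>\<bar> powr p3)" using Lp(2) unfolding Lp_fun_def by blast
lemma int_C4: "integrable P (\<lambda>\<omega>. \<bar>C4 \<omega>\<bar> powr p4)" using Lp(3) unfolding Lp_fun_def by blast

lemma shift_int:
  fixes f :: "'w \<Rightarrow> real"
  assumes "f \<in> borel_measurable P" "integrable P f"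
  shows "integrable P (\<lambda>\<omega>. f ((s ^^ k) \<omega>))" "(\<integral>\<omega>. f ((s ^^ k) \<omega>) \<partial>P) = integral\<^sup>L P f"
proof -
  show "integrable P (\<lambda>\<omega>. f ((s ^^ k) \<omega>))"
  proof (rule integrable_distr[OF sk_meas])
    show "integrable (distr P P (s ^^ k)) f" unfolding distr_sk by (rule assms(2))
  qed
  show "(\<integral>\<omega>. f ((s ^^ k) \<omega>) \<partial>P) = integral\<^sup>L P f"
  proof -
    have "integral\<^sup>L (distr P P (s ^^ k)) f = (\<integral>x. f ((s ^^ k) x) \<partial>P)"
      by (rule integral_distr) (rule sk_meas, rule assms(1))
    then show ?thesis unfolding distr_sk by (rule sym)
  qed
qed

definition "Y j1 j3 j4 \<omega> = 2 + \<bar>G \<omega>\<bar> powr p6 + \<bar>C1 ((s ^^ j1) \<omega>)\<bar> powr p1 + \<bar>C3 ((s ^^ j3) \<omega>)\<bar> powr p3 + \<bar>C4 ((s ^^ j4) \<omega>)\<bar> powr p4"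
definition "KY = 2 + (\<integral>\<omega>. \<bar>G \<omega>\<bar> powr p6 \<partial>P) + (\<integral>\<omega>. \<bar>C1 \<omega>\<bar> powr p1 \<partial>P) + (\<integral>\<omega>. \<bar>C3 \<omega>\<bar> powr p3 \<partial>P) + (\<integral>\<omega>. \<bar>C4 \<omega>\<bar> powr p4 \<partial>P)"

lemma Y_meas: "Y j1 j3 j4 \<in> borel_measurable P"
proof -
  have [measurable]: "G \<in> borel_measurable P" "C1 \<in> borel_measurable P" "C3 \<in> borel_measurable P" "C4 \<in> borel_measurable P"
    "(s ^^ j1) \<in> measurable P P" "(s ^^ j3) \<in> measurable P P" "(s ^^ j4) \<in> measurable P P"
    using G_meas C1_meas C3_meas C4_meas sk_meas by auto
  show ?thesis unfolding Y_def by measurable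
qed

lemma Y_int: "integrable P (Y j1 j3 j4)" "integral\<^sup>L P (Y j1 j3 j4) = KY"
proof -
  have m1: "(\<lambda>\<omega>. \<bar>C1 \<omega>\<bar> powr p1) \<in> borel_measurable P" using C1_meas by measurable
  have m3: "(\<lambda>\<omega>. \<bar>C3 \<omega>\<bar> powr p3) \<in> borel_measurable P" using C3_meas by measurable
  have m4: "(\<lambda>\<omega>. \<bar>C4 \<omega>\<bar> powr p4) \<in> borel_measurable P" using C4_meas by measurable
  note i1 = shift_int[OF m1 int_C1, of j1] and i3 = shift_int[OF m3 int_C3, of j3] and i4 = shift_int[OF m4 int_C4, of j4]
  have i0: "integrable P (\<lambda>\<omega>. 2 + \<bar>G \<omega>\<bar> powr p6)" using int_G by simp
  show "integrable P (Y j1 j3 j4)" unfolding Y_def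
    using i0 i1(1) i3(1) i4(1) int_G by (intro Bochner_Integration.integrable_add) auto
  have "integral\<^sup>L P (Y j1 j3 j4) = (\<integral>\<omega>. 2 + \<bar>G \<omega>\<bar> powr p6 \<partial>P) + (\<integral>\<omega>. \<bar>C1 ((s ^^ j1) \<omega>)\<bar> powr p1 \<partial>P)
     + (\<integral>\<omega>. \<bar>C3 ((s ^^ j3) \<omega>)\<bar> powr p3 \<partial>P) + (\<integral>\<omega>. \<bar>C4 ((s ^^ j4) \<omega>)\<bar> powr p4 \<partial>P)"
    unfolding Y_def using i0 i1(1) i3(1) i4(1) int_G
    by (simp add: Bochner_Integration.integral_add Bochner_Integration.integrable_add)
  also have "\<dots> = KY" unfolding KY_def i1(2) i3(2) i4(2) using int_G
    by (simp add: Bochner_Integration.integral_add P.prob_space)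
  finally show "integral\<^sup>L P (Y j1 j3 j4) = KY" .
qed

lemma Y_nn: "Y j1 j3 j4 \<omega> \<ge> 0" unfolding Y_def by simp

end

context ctx begin

definition "ck k = (if k = 0 then 1 else real k powr (-\<beta>))"

lemma ck_nn: "ck k \<ge> 0" unfolding ck_def by simp

lemma ck_summable: "summable ck"
proof -
  have "summable (\<lambda>k. real k powr (-\<beta>))" using \<beta> by (simp add: summable_real_powr_iff)
  moreover have "eventually (\<lambda>k. ck k = real k powr (-\<beta>)) sequentially"
    using eventually_ge_at_top[of 1] by eventually_elim (simp add: ck_def)
  then have "summable ck = summable (\<lambda>k. real k powr (-\<beta>))" by (rule summable_cong)
  ultimately show ?thesis by simp
qed

lemma prod4': assumes "\<omega> \<in> space P" "x1 \<ge> 0" "x3 \<ge> 0" "x4 \<ge> 0"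
  shows "G \<omega> * x1 * x3 * x4 \<le> 1 + \<bar>G \<omega>\<bar> powr p6 + x1 powr p1 + x3 powr p3 + x4 powr p4"
  using prod4_le[of "G \<omega>" x1 x3 x4 p6 p1 p3 p4] Phi_AE(1)[OF assms(1)] assms \<Phi>(4,5) Lp(4-6) by simp

lemma bnd_le: assumes "\<omega> \<in> space P" shows "bnd \<omega> k \<le> 2 * ck k * Y k (Suc k) (Suc k) \<omega>"
proof -
  define x1 where "x1 = (if k = 0 then 1 else \<bar>C1 ((s ^^ k) \<omega>)\<bar>)"
  have x1: "x1 \<ge> 0" unfolding x1_def by simp
  have p: "G \<omega> * x1 * \<bar>C3 ((s ^^ Suc k) \<omega>)\<bar> * \<bar>C4 ((s ^^ Suc k) \<omega>)\<bar> \<le>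
      1 + \<bar>G \<omega>\<bar> powr p6 + x1 powr p1 + \<bar>C3 ((s ^^ Suc k) \<omega>)\<bar> powr p3 + \<bar>C4 ((s ^^ Suc k) \<omega>)\<bar> powr p4"
    by (rule prod4'[OF assms x1]) auto
  also have "\<dots> \<le> Y k (Suc k) (Suc k) \<omega>"
    unfolding Y_def x1_def using powr_ge_zero[of "\<bar>C1 ((s ^^ k) \<omega>)\<bar>" p1] by auto
  finally have q: "G \<omega> * x1 * \<bar>C3 ((s ^^ Suc k) \<omega>)\<bar> * \<bar>C4 ((s ^^ Suc k) \<omega>)\<bar> \<le> Y k (Suc k) (Suc k) \<omega>" .
  have e: "bnd \<omega> k = 2 * ck k * (G \<omega> * x1 * \<bar>C3 ((s ^^ Suc k) \<omega>)\<bar> * \<bar>C4 ((s ^^ Suc k) \<omega>)\<bar>)"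
    unfolding bnd_def ck_def x1_def by (simp add: ac_simps)
  show ?thesis unfolding e using q ck_nn by (intro mult_left_mono) auto
qed

lemma Rem_le: assumes "\<omega> \<in> space P" shows "Rem \<omega> n \<le> 2 * ck n * Y n n n \<omega>"
proof -
  have p: "G \<omega> * \<bar>C1 ((s ^^ n) \<omega>)\<bar> * 1 * \<bar>C4 ((s ^^ n) \<omega>)\<bar> \<le>
      1 + \<bar>G \<omega>\<bar> powr p6 + \<bar>C1 ((s ^^ n) \<omega>)\<bar> powr p1 + 1 powr p3 + \<bar>C4 ((s ^^ n) \<omega>)\<bar> powr p4"
    by (rule prod4'[OF assms]) auto
  also have "\<dots> \<le> Y n n n \<omega>"
    unfolding Y_def using powr_ge_zero[of "\<bar>C3 ((s ^^ n) \<omega>)\<bar>" p3] by auto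
  finally have q: "G \<omega> * \<bar>C1 ((s ^^ n) \<omega>)\<bar> * 1 * \<bar>C4 ((s ^^ n) \<omega>)\<bar> \<le> Y n n n \<omega>" .
  have e: "Rem \<omega> n = 2 * real n powr (-\<beta>) * (G \<omega> * \<bar>C1 ((s ^^ n) \<omega>)\<bar> * 1 * \<bar>C4 ((s ^^ n) \<omega>)\<bar>)"
    unfolding Rem_def by (simp add: ac_simps)
  have c: "real n powr (-\<beta>) \<le> ck n" unfolding ck_def by simp
  have "Rem \<omega> n \<le> 2 * real n powr (-\<beta>) * Y n n n \<omega>" unfolding e using q by (intro mult_left_mono) auto
  also have "\<dots> \<le> 2 * ck n * Y n n n \<omega>" using c Y_nn by (intro mult_right_mono) auto
  finally show ?thesis .
qed

lemma bnd_meas: "(\<lambda>\<omega>. bnd \<omega> k) \<in> borel_measurable P"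
proof -
  have [measurable]: "G \<in> borel_measurable P" "C1 \<in> borel_measurable P" "C3 \<in> borel_measurable P" "C4 \<in> borel_measurable P"
    "(s ^^ k) \<in> measurable P P" "s \<in> measurable P P"
    using G_meas C1_meas C3_meas C4_meas sk_meas s_meas by auto
  show ?thesis unfolding bnd_def by measurable
qed

lemma Rem_meas: "(\<lambda>\<omega>. Rem \<omega> k) \<in> borel_measurable P"
proof -
  have [measurable]: "G \<in> borel_measurable P" "C1 \<in> borel_measurable P" "C4 \<in> borel_measurable P"
    "(s ^^ k) \<in> measurable P P"
    using G_meas C1_meas C4_meas sk_meas by auto
  show ?thesis unfolding Rem_def by measurable
qed

lemma bnd_nn: "\<omega> \<in> space P \<Longrightarrow> bnd \<omega> k \<ge> 0"
  unfolding bnd_def using Phi_AE(1) by simp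
lemma Rem_nn: "\<omega> \<in> space P \<Longrightarrow> Rem \<omega> k \<ge> 0"
  unfolding Rem_def using Phi_AE(1) by simp

lemma dom_gen:
  assumes meas: "(\<lambda>\<omega>. f \<omega>) \<in> borel_measurable P" and nn: "\<And>\<omega>. \<omega> \<in> space P \<Longrightarrow> f \<omega> \<ge> 0"
    and le: "\<And>\<omega>. \<omega> \<in> space P \<Longrightarrow> f \<omega> \<le> 2 * c * Y j1 j3 j4 \<omega>"
  shows "integrable P f" "integral\<^sup>L P f \<le> 2 * c * KY"
proof -
  have iY: "integrable P (\<lambda>\<omega>. 2 * c * Y j1 j3 j4 \<omega>)" using Y_int(1) by simp
  show i: "integrable P f"
  proof (rule Bochner_Integration.integrable_bound[OF iY meas])
    show "AE x in P. norm (f x) \<le> norm (2 * c * Y j1 j3 j4 x)"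
      by (intro AE_I2) (use nn le in force)
  qed
  have "integral\<^sup>L P f \<le> (\<integral>\<omega>. 2 * c * Y j1 j3 j4 \<omega> \<partial>P)"
    by (rule integral_mono[OF i iY le])
  also have "\<dots> = 2 * c * KY" using Y_int(2) by simp
  finally show "integral\<^sup>L P f \<le> 2 * c * KY" .
qed

lemma bnd_summ: "(\<integral>\<^sup>+\<omega>. (\<Sum>k. ennreal (bnd \<omega> k)) \<partial>P) < \<infinity>" "AE \<omega> in P. summable (bnd \<omega>)"
proof -
  have s: "summable (\<lambda>k. 2 * ck k * KY)" using ck_summable by (intro summable_mult2 summable_mult)
  note d = dom_gen[OF bnd_meas bnd_nn bnd_le]
  show "(\<integral>\<^sup>+\<omega>. (\<Sum>k. ennreal (bnd \<omega> k)) \<partial>P) < \<infinity>"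
    using AE_summable_gen(1)[of "\<lambda>k \<omega>. bnd \<omega> k" P "\<lambda>k. 2 * ck k * KY"] bnd_meas bnd_nn d s by blast
  have "AE \<omega> in P. summable (\<lambda>k. bnd \<omega> k)"
    using AE_summable_gen(2)[of "\<lambda>k \<omega>. bnd \<omega> k" P "\<lambda>k. 2 * ck k * KY"] bnd_meas bnd_nn d s by blast
  then show "AE \<omega> in P. summable (bnd \<omega>)" by simp
qed

lemma Rem_lim: "AE \<omega> in P. Rem \<omega> \<longlonglongrightarrow> 0"
proof -
  have s: "summable (\<lambda>k. 2 * ck k * KY)" using ck_summable by (intro summable_mult2 summable_mult)
  note d = dom_gen[OF Rem_meas Rem_nn Rem_le]
  have "AE \<omega> in P. summable (\<lambda>k. Rem \<omega> k)"
    using AE_summable_gen(2)[of "\<lambda>k \<omega>. Rem \<omega> k" P "\<lambda>k. 2 * ck k * KY"] Rem_meas Rem_nn d s by blast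
  then show ?thesis by (rule AE_mp) (auto intro: summable_LIMSEQ_zero)
qed

end

lemma ennreal_enn2real_le: "ennreal (enn2real x) \<le> x"
  by (cases x) auto

context ctx begin

definition "Fd \<omega> = enn2real (\<Sum>k. ennreal (bnd \<omega> k))"

lemma Fd_meas: "Fd \<in> borel_measurable P"
proof -
  have [measurable]: "\<And>k. (\<lambda>\<omega>. bnd \<omega> k) \<in> borel_measurable P" by (rule bnd_meas)
  show ?thesis unfolding Fd_def by measurable
qed

lemma Fd_int: "integrable P Fd"
proof (rule integrableI_nonneg[OF Fd_meas])
  show "AE x in P. 0 \<le> Fd x" unfolding Fd_def by simp
  have "(\<integral>\<^sup>+x. ennreal (Fd x) \<partial>P) \<le> (\<integral>\<^sup>+\<omega>. (\<Sum>k. ennreal (bnd \<omega> k)) \<partial>P)"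
    unfolding Fd_def by (intro nn_integral_mono ennreal_enn2real_le)
  then show "(\<integral>\<^sup>+x. ennreal (Fd x) \<partial>P) < \<infinity>" using bnd_summ(1) by (rule le_less_trans)
qed

lemma Fd_eq: assumes "\<omega> \<in> space P" "summable (bnd \<omega>)" shows "Fd \<omega> = (\<Sum>k. bnd \<omega> k)"
proof -
  have "(\<Sum>k. ennreal (bnd \<omega> k)) = ennreal (\<Sum>k. bnd \<omega> k)"
    by (rule suminf_ennreal2[OF bnd_nn[OF assms(1)] assms(2)])
  moreover have "(\<Sum>k. bnd \<omega> k) \<ge> 0" by (rule suminf_nonneg[OF assms(2) bnd_nn[OF assms(1)]])
  ultimately show ?thesis unfolding Fd_def by simp
qed

lemma phiH_meas: assumes "\<epsilon> \<in> I" shows "(\<lambda>\<omega>. phi \<omega> (h \<epsilon> \<omega>)) \<in> borel_measurable P"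
proof -
  have "(\<lambda>z. (\<lambda>(\<omega>, x). \<Phi> \<omega> x) z * (\<lambda>(\<omega>, x). h \<epsilon> \<omega> x) z) \<in> borel_measurable (P \<Otimes>\<^sub>M m)"
    using \<Phi>(1) H5a assms by (intro borel_measurable_times) auto
  moreover have "(\<lambda>z. (\<lambda>(\<omega>, x). \<Phi> \<omega> x) z * (\<lambda>(\<omega>, x). h \<epsilon> \<omega> x) z) = (\<lambda>(\<omega>, x). \<Phi> \<omega> x * h \<epsilon> \<omega> x)"
    by (auto simp: fun_eq_iff)
  ultimately have "case_prod (\<lambda>\<omega> x. \<Phi> \<omega> x * h \<epsilon> \<omega> x) \<in> borel_measurable (P \<Otimes>\<^sub>M m)" by simp
  then show ?thesis unfolding phi_def by (rule m.borel_measurable_lebesgue_integral)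
qed

lemma G_int: "integrable P (\<lambda>\<omega>. 1 + \<bar>G \<omega>\<bar> powr p6)" using int_G by simp

lemma phiH_int: assumes "\<epsilon> \<in> I" shows "integrable P (\<lambda>\<omega>. phi \<omega> (h \<epsilon> \<omega>))"
proof (rule Bochner_Integration.integrable_bound[OF G_int phiH_meas[OF assms]])
  have "AE \<omega> in P. \<omega> \<in> Om \<epsilon>" using Om assms P.AE_in_set_eq_1 by blast
  then show "AE \<omega> in P. norm (phi \<omega> (h \<epsilon> \<omega>)) \<le> norm (1 + \<bar>G \<omega>\<bar> powr p6)"
  proof (rule AE_mp, intro AE_I2 impI)
    fix \<omega> assume "\<omega> \<in> Om \<epsilon>"
    then have "\<bar>phi \<omega> (h \<epsilon> \<omega>)\<bar> \<le> G \<omega>" by (rule phi_h[OF assms])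
    also have "\<dots> \<le> 1 + \<bar>G \<omega>\<bar> powr p6" using le_one_plus_powr[OF _ p6_ge1, of "\<bar>G \<omega>\<bar>"] by simp
    finally show "norm (phi \<omega> (h \<epsilon> \<omega>)) \<le> norm (1 + \<bar>G \<omega>\<bar> powr p6)" by simp
  qed
qed

lemma D_fun: "D \<epsilon> = (\<lambda>\<omega>. (phi \<omega> (h \<epsilon> \<omega>) - phi \<omega> (h 0 \<omega>)) / \<epsilon>)"
  by (rule ext) (simp add: D_def)

lemma D_meas: assumes "\<epsilon> \<in> I" shows "D \<epsilon> \<in> borel_measurable P"
  unfolding D_fun using phiH_meas[OF assms] phiH_meas[OF zero_I] by measurable

lemma D_integral: assumes "\<epsilon> \<in> I"
  shows "integral\<^sup>L P (D \<epsilon>) = ((\<integral>\<omega>. phi \<omega> (h \<epsilon> \<omega>) \<partial>P) - (\<integral>\<omega>. phi \<omega> (h 0 \<omega>) \<partial>P)) / \<epsilon>"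
  unfolding D_fun
  by (simp add: integral_divide_zero Bochner_Integration.integral_diff[OF phiH_int[OF assms] phiH_int[OF zero_I]])

lemma seq_main:
  assumes X: "\<And>i. X i \<in> I" "\<And>i. X i \<noteq> 0" "X \<longlonglongrightarrow> 0"
  shows "(\<lambda>i. integral\<^sup>L P (D (X i))) \<longlonglongrightarrow> (\<integral>\<omega>. lim (\<lambda>i. D (X i) \<omega>) \<partial>P)"
    "AE \<omega> in P. lim (\<lambda>i. D (X i) \<omega>) = (\<Sum>k. a0 \<omega> k)"
proof -
  have gX: "AE \<omega> in P. \<forall>i. good (X i) \<omega>" using AE_good X(1) by (simp add: AE_all_countable)
  have ae: "AE \<omega> in P. (\<forall>i. good (X i) \<omega>) \<and> good 0 \<omega> \<and> (\<forall>k. LhOK ((s ^^ k) \<omega>)) \<and> summable (bnd \<omega>) \<and> Rem \<omega> \<longlonglongrightarrow> 0"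
    using gX AE_good[OF zero_I] AE_LhOK_all bnd_summ(2) Rem_lim by eventually_elim blast
  have conv: "AE \<omega> in P. (\<lambda>i. D (X i) \<omega>) \<longlonglongrightarrow> (\<Sum>k. a0 \<omega> k)"
    using ae by eventually_elim (intro pointwise[OF X(1,2)] X(3); blast)
  show "AE \<omega> in P. lim (\<lambda>i. D (X i) \<omega>) = (\<Sum>k. a0 \<omega> k)"
    using conv by eventually_elim (rule limI)
  have conv2: "AE \<omega> in P. (\<lambda>i. D (X i) \<omega>) \<longlonglongrightarrow> lim (\<lambda>i. D (X i) \<omega>)"
    using conv by eventually_elim (simp add: limI)
  show "(\<lambda>i. integral\<^sup>L P (D (X i))) \<longlonglongrightarrow> (\<integral>\<omega>. lim (\<lambda>i. D (X i) \<omega>) \<partial>P)"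
  proof (rule integral_dominated_convergence[OF _ _ Fd_int conv2])
    show "(\<lambda>\<omega>. lim (\<lambda>i. D (X i) \<omega>)) \<in> borel_measurable P"
      using D_meas[OF X(1)] by (rule borel_measurable_lim_metric)
    show "\<And>i. D (X i) \<in> borel_measurable P" using D_meas[OF X(1)] .
    show "AE \<omega> in P. norm (D (X i) \<omega>) \<le> Fd \<omega>" for i
      using ae AE_space
    proof eventually_elim
      case (elim \<omega>)
      then show ?case using dom[OF X(1,2), of i \<omega>] Fd_eq[of \<omega>] by auto
    qed
  qed
qed

end

context ctx begin

lemma final: "(\<lambda>\<epsilon>. \<integral>\<omega>. (\<integral>x. \<Phi> \<omega> x * h \<epsilon> \<omega> x \<partial>m) \<partial>P) differentiable (at 0)"
proof -
  define Fn where "Fn \<epsilon> = (\<integral>\<omega>. phi \<omega> (h \<epsilon> \<omega>) \<partial>P)" for \<epsilon>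
  have Fn_eq: "(\<lambda>\<epsilon>. \<integral>\<omega>. (\<integral>x. \<Phi> \<omega> x * h \<epsilon> \<omega> x \<partial>m) \<partial>P) = Fn"
    unfolding Fn_def phi_def ..
  define X0 where "X0 i = b / real (i + 2)" for i :: nat
  have X0I: "X0 i \<in> I" for i
  proof -
    have "0 < X0 i" unfolding X0_def using I by (intro divide_pos_pos) auto
    moreover have "X0 i < b" unfolding X0_def using I by (simp add: field_simps add_pos_nonneg)
    ultimately show ?thesis using I by simp
  qed
  have X00: "X0 i \<noteq> 0" for i unfolding X0_def using I by simp
  have X0l: "X0 \<longlonglongrightarrow> 0"
  proof -
    have "(\<lambda>n. b / real n) \<longlonglongrightarrow> 0" by (rule lim_const_over_n)
    then have "(\<lambda>n. b / real (n + 2)) \<longlonglongrightarrow> 0" by (rule LIMSEQ_ignore_initial_segment)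
    then show ?thesis unfolding X0_def .
  qed
  define c where "c = (\<integral>\<omega>. lim (\<lambda>i. D (X0 i) \<omega>) \<partial>P)"
  have lim: "((\<lambda>y. (Fn y - Fn 0) / (y - 0)) \<longlongrightarrow> c) (at 0 within I)"
    unfolding tendsto_at_iff_sequentially
  proof (intro allI impI)
    fix X :: "nat \<Rightarrow> real" assume XI: "\<forall>i. X i \<in> I - {0}" and X: "X \<longlonglongrightarrow> 0"
    have X1: "X i \<in> I" "X i \<noteq> 0" for i using XI by auto
    note sX = seq_main[OF X1 X] and s0 = seq_main[OF X0I X00 X0l]
    have "(\<integral>\<omega>. lim (\<lambda>i. D (X i) \<omega>) \<partial>P) = c" unfolding c_def
    proof (rule integral_cong_AE)
      show "(\<lambda>\<omega>. lim (\<lambda>i. D (X i) \<omega>)) \<in> borel_measurable P"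
        using D_meas[OF X1(1)] by (rule borel_measurable_lim_metric)
      show "(\<lambda>\<omega>. lim (\<lambda>i. D (X0 i) \<omega>)) \<in> borel_measurable P"
        using D_meas[OF X0I] by (rule borel_measurable_lim_metric)
      show "AE \<omega> in P. lim (\<lambda>i. D (X i) \<omega>) = lim (\<lambda>i. D (X0 i) \<omega>)"
        using sX(2) s0(2) by eventually_elim simp
    qed
    moreover have "((\<lambda>y. (Fn y - Fn 0) / (y - 0)) \<circ> X) = (\<lambda>i. integral\<^sup>L P (D (X i)))"
      by (rule ext) (simp add: D_integral[OF X1(1)] Fn_def)
    ultimately show "((\<lambda>y. (Fn y - Fn 0) / (y - 0)) \<circ> X) \<longlonglongrightarrow> c" using sX(1) by simp
  qed
  have "open I" using I by simp
  then have "at 0 within I = at (0::real)" using zero_I at_within_open by blast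
  then have "((\<lambda>y. (Fn y - Fn 0) / (y - 0)) \<longlongrightarrow> c) (at 0)" using lim by simp
  then have "(Fn has_field_derivative c) (at 0)" by (simp add: has_field_derivative_iff)
  then have "Fn differentiable (at 0)" using real_differentiable_def by blast
  then show ?thesis unfolding Fn_eq .
qed

end

theorem theorem8:
  fixes P :: "'w measure" and \<sigma> :: "'w \<Rightarrow> 'w"
    and m :: "'x measure"
    and Bw Bs Bss :: "('x \<Rightarrow> real) set"
    and nw ns nss :: "('x \<Rightarrow> real) \<Rightarrow> real"
    and I :: "real set" and a b :: real
    and L :: "'w \<Rightarrow> real \<Rightarrow> ('x \<Rightarrow> real) \<Rightarrow> ('x \<Rightarrow> real)"
    and Om :: "real \<Rightarrow> 'w set"
    and C0 C1 C2 C3 C4 A B :: "'w \<Rightarrow> real"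
    and p0 p1 p2 p3 p4 p5 p6 \<beta> :: real
    and h :: "real \<Rightarrow> 'w \<Rightarrow> 'x \<Rightarrow> real"
    and \<Phi> :: "'w \<Rightarrow> 'x \<Rightarrow> real"
  assumes P: "prob_space P"
    and \<sigma>: "invertible_mp P \<sigma>" "ergodic P \<sigma>"
    and m: "prob_space m"
    and spaces: "fun_banach m Bw nw" "fun_banach m Bs ns" "fun_banach m Bss nss"
      "Bss \<subseteq> Bs" "Bs \<subseteq> Bw" "\<forall>f\<in>Bw. integrable m f"
      "\<forall>f\<in>Bw. L1norm m f \<le> nw f" "\<forall>f\<in>Bs. nw f \<le> ns f" "\<forall>f\<in>Bss. ns f \<le> nss f"
    and I: "I = {a<..<b}" "-1 \<le> a" "a < 0" "0 < b" "b \<le> 1"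
    and L_bounded: "\<forall>\<epsilon>\<in>I. \<forall>\<omega>\<in>space P.
        bounded_op_on Bw nw (L \<omega> \<epsilon>) \<and> bounded_op_on Bs ns (L \<omega> \<epsilon>) \<and>
        bounded_op_on Bss nss (L \<omega> \<epsilon>)"
    and L_psi: "\<forall>\<epsilon>\<in>I. \<forall>\<omega>\<in>space P. \<forall>f\<in>Bw. (\<integral>x. L \<omega> \<epsilon> f x \<partial>m) = (\<integral>x. f x \<partial>m)"
    and Lp: "Lp_fun P p0 C0" "Lp_fun P p1 C1" "Lp_fun P p2 C2" "Lp_fun P p3 C3" "Lp_fun P p4 C4"
      "Lp_fun P p5 A" "Lp_fun P p5 B"
      "p0 > 0" "p1 > 0" "p2 > 0" "p3 > 0" "p4 > 0" "p5 > 0"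
    and \<beta>: "\<beta> > 1"
    and Om: "\<forall>\<epsilon>\<in>I. Om \<epsilon> \<in> sets P \<and> measure P (Om \<epsilon>) = 1"
    and H1: "\<forall>n\<ge>1. \<forall>\<epsilon>\<in>I. \<forall>\<omega>\<in>Om \<epsilon>. \<forall>f\<in>Bw.
        nw (cocycle L \<sigma> n ((sinv P \<sigma> ^^ n) \<omega>) \<epsilon> f) \<le> C0 \<omega> * nw f"
    and H2: "\<forall>n\<ge>1. \<forall>\<epsilon>\<in>I. \<forall>\<omega>\<in>Om \<epsilon>. \<forall>f\<in>Bs. (\<integral>x. f x \<partial>m) = 0 \<longrightarrow>
        nw (cocycle L \<sigma> n \<omega> \<epsilon> f) \<le> C1 \<omega> * real n powr (-\<beta>) * ns f"
    and H3: "\<forall>\<epsilon>\<in>I. \<forall>\<omega>\<in>Om \<epsilon>. \<forall>f\<in>Bs.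
        nw (\<lambda>x. L \<omega> \<epsilon> f x - L \<omega> 0 f x) \<le> C2 \<omega> * \<bar>\<epsilon>\<bar> * ns f"
    and H4: "\<exists>Lhat :: 'w \<Rightarrow> ('x \<Rightarrow> real) \<Rightarrow> ('x \<Rightarrow> real).
        (AE \<omega> in P.
           (\<forall>f\<in>Bss. \<forall>g\<in>Bss. Lhat \<omega> (\<lambda>x. f x + g x) = (\<lambda>x. Lhat \<omega> f x + Lhat \<omega> g x)) \<and>
           (\<forall>c. \<forall>f\<in>Bss. Lhat \<omega> (\<lambda>x. c * f x) = (\<lambda>x. c * Lhat \<omega> f x)) \<and>
           (\<forall>f\<in>Bss. Lhat \<omega> f \<in> Bs \<and> (\<integral>x. Lhat \<omega> f x \<partial>m) = 0) \<and>
           (\<forall>f\<in>Bss. ns (Lhat \<omega> f) \<le> C3 \<omega> * nss f)) \<and>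
        (\<forall>\<epsilon>\<in>I - {0}. \<forall>\<omega>\<in>Om \<epsilon>. \<forall>f\<in>Bss.
           ns (\<lambda>x. (L \<omega> \<epsilon> f x - L \<omega> 0 f x) / \<epsilon> - Lhat \<omega> f x) \<le> C3 \<omega> * \<bar>\<epsilon>\<bar> * nss f)"
    and H5: "\<forall>\<epsilon>\<in>I. (\<lambda>(\<omega>, x). h \<epsilon> \<omega> x) \<in> borel_measurable (P \<Otimes>\<^sub>M m)"
      "\<forall>\<epsilon>\<in>I. \<forall>\<omega>\<in>Om \<epsilon>. h \<epsilon> \<omega> \<in> Bss \<and> (\<forall>x\<in>space m. h \<epsilon> \<omega> x \<ge> 0) \<and>
         L \<omega> \<epsilon> (h \<epsilon> \<omega>) = h \<epsilon> (\<sigma> \<omega>) \<and> (\<integral>x. h \<epsilon> \<omega> x \<partial>m) = 1 \<and>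
         nss (h \<epsilon> \<omega>) \<le> C4 \<omega>"
    and H6: "AE \<omega> in P. \<forall>n\<ge>1. \<forall>j\<le>n. \<forall>f\<in>Bs.
        ns (cocycle L \<sigma> j ((sinv P \<sigma> ^^ n) \<omega>) 0 f)
          \<le> A ((sinv P \<sigma> ^^ n) \<omega>) * B ((sinv P \<sigma> ^^ (n - j)) \<omega>) * ns f"
    and \<Phi>: "(\<lambda>(\<omega>, x). \<Phi> \<omega> x) \<in> borel_measurable (P \<Otimes>\<^sub>M m)"
      "\<forall>\<omega>\<in>space P. Linf_norm m (\<Phi> \<omega>) < \<infinity>"
      "Lp_fun P p6 (\<lambda>\<omega>. real_of_ereal (Linf_norm m (\<Phi> \<omega>)))" "p6 > 0"
      "1/p6 + 1/p1 + 1/p3 + 1/p4 \<le> 1"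
      "1/p6 + 1/p0 + 1/p2 + 2/p5 + 1/p3 + 1/p4 \<le> 1"
  shows "(\<lambda>\<epsilon>. \<integral>\<omega>. (\<integral>x. \<Phi> \<omega> x * h \<epsilon> \<omega> x \<partial>m) \<partial>P) differentiable (at 0)"
proof -
  obtain Lhat :: "'w \<Rightarrow> ('x \<Rightarrow> real) \<Rightarrow> ('x \<Rightarrow> real)" where
    H4a: "AE \<omega> in P.
           (\<forall>f\<in>Bss. \<forall>g\<in>Bss. Lhat \<omega> (\<lambda>x. f x + g x) = (\<lambda>x. Lhat \<omega> f x + Lhat \<omega> g x)) \<and>
           (\<forall>c. \<forall>f\<in>Bss. Lhat \<omega> (\<lambda>x. c * f x) = (\<lambda>x. c * Lhat \<omega> f x)) \<and>
           (\<forall>f\<in>Bss. Lhat \<omega> f \<in> Bs \<and> (\<integral>x. Lhat \<omega> f x \<partial>m) = 0) \<and>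
           (\<forall>f\<in>Bss. ns (Lhat \<omega> f) \<le> C3 \<omega> * nss f)" and
    H4b: "\<forall>\<epsilon>\<in>I - {0}. \<forall>\<omega>\<in>Om \<epsilon>. \<forall>f\<in>Bss.
           ns (\<lambda>x. (L \<omega> \<epsilon> f x - L \<omega> 0 f x) / \<epsilon> - Lhat \<omega> f x) \<le> C3 \<omega> * \<bar>\<epsilon>\<bar> * nss f"
    using H4 by blast
  interpret ctx P \<sigma> m Bw Bs Bss nw ns nss I a b L Om C0 C1 C2 C3 C4 p1 p3 p4 p6 \<beta> h \<Phi> Lhat
    by (rule ctx.intro[OF P \<sigma>(1) m spaces(1-9) I L_bounded L_psi Lp(2,4,5,9,11,12) \<beta> Om H1 H2 H3 H4a H4b H5 \<Phi>(1-5)])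
  show ?thesis by (rule final)
qed


end
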